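(* Let $n\ge1$ and write the Jones–Wenzl idempotent $f_n$ in the Temperley–Lieb algebra on $n$ strands as $f_n=\sum_M c_M(A)\,M$, the sum over crossingless matchings $M$ of $n$ points to $n$ points, with $c_M(A)\in\mathbb{Q}(A)$. Then for every $M$ with $c_M\neq0$, the minimum degree of $c_M(A)$, expanded as a Laurent series in $A$, is at least $2\ell(M)$, where $\ell(M)$ is the minimum length of a word in the hook generators $h_1,\dots,h_{n-1}$ representing $M$ in the Temperley–Lieb monoid.
   Context: The Temperley–Lieb algebra on $n$ strands over $\mathbb{Q}(A)$ has basis the crossingless matchings of $n$ points on the bottom to $n$ points on the top, multiplied by stacking, with each closed loop replaced by the factor $-A^2-A^{-2}$. The Temperley–Lieb monoid is the set of crossingless matchings with stacking as product where closed loops are simply discarded; it is generated by the hooks $h_i$ ($1\le i\le n-1$), the matching that joins top points $i,i+1$ to each other, bottom points $i,i+1$ to each other, and all other points vertically. With $\Delta_m=(-1)^m\frac{A^{2(m+1)}-A^{-2(m+1)}}{A^2-A^{-2}}$, the Jones–Wenzl idempotents are defined recursively by $f_1=\mathrm{id}$ and $f_{m+1}=(f_m\otimes\mathrm{id}_1)-\frac{\Delta_{m-1}}{\Delta_m}(f_m\otimes\mathrm{id}_1)\,h_m\,(f_m\otimes\mathrm{id}_1)$. *)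

theory Defs
  imports "HOL-Computational_Algebra.Fraction_Field"
          "HOL-Computational_Algebra.Formal_Laurent_Series"
begin

text \<open>Boundary points of an n-strand diagram: (False,i) is the i-th bottom point,
 (True,i) the i-th top point (0-indexed, left to right), for i < n.
 A diagram is a fixed-point-free involution on these points, extended by the
 identity outside them (normalisation, so that diagrams are equal iff equal as functions).\<close>

type_synonym pt = "bool \<times> nat"
type_synonym diagram = "pt \<Rightarrow> pt"

definition pts :: "nat \<Rightarrow> pt set" where
  "pts n = {p. snd p < n}"

text \<open>Position of a point when walking around the boundary of the rectangle:
 bottom left-to-right, then top right-to-left.\<close>
definition bpos :: "nat \<Rightarrow> pt \<Rightarrow> nat" where
  "bpos n p = (if fst p then 2 * n - 1 - snd p else snd p)"

definition CM :: "nat \<Rightarrow> diagram set" where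
  "CM n = {M. (\<forall>p\<in>pts n. M p \<in> pts n \<and> M p \<noteq> p \<and> M (M p) = p)
            \<and> (\<forall>p. p \<notin> pts n \<longrightarrow> M p = p)
            \<and> \<not> (\<exists>p\<in>pts n. \<exists>q\<in>pts n.
                   bpos n p < bpos n q \<and> bpos n q < bpos n (M p) \<and> bpos n (M p) < bpos n (M q))}"

definition id_diag :: "nat \<Rightarrow> diagram" where
  "id_diag n = (\<lambda>(b, j). if j < n then (\<not> b, j) else (b, j))"

text \<open>Hook h_i (1 \<le> i \<le> n-1), joining points i, i+1 (1-indexed) on top and on bottom.\<close>
definition hook :: "nat \<Rightarrow> nat \<Rightarrow> diagram" where
  "hook n i = (\<lambda>(b, j). if j = i - 1 then (b, i) else if j = i then (b, i - 1)
                        else if j < n then (\<not> b, j) else (b, j))"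

text \<open>Stacking P (below) and Q (above): vertices (level, index) with level 0 = bottom of P,
 1 = middle (top of P = bottom of Q), 2 = top of Q.\<close>

definition lowlift :: "pt \<Rightarrow> nat \<times> nat" where
  "lowlift p = (if fst p then 1 else 0, snd p)"
definition uplift :: "pt \<Rightarrow> nat \<times> nat" where
  "uplift p = (if fst p then 2 else 1, snd p)"

definition glue_edges :: "nat \<Rightarrow> diagram \<Rightarrow> diagram \<Rightarrow> ((nat \<times> nat) \<times> (nat \<times> nat)) set" where
  "glue_edges n P Q = {(lowlift p, lowlift (P p)) | p. p \<in> pts n}
                    \<union> {(uplift p, uplift (Q p)) | p. p \<in> pts n}"

definition glue_conn :: "nat \<Rightarrow> diagram \<Rightarrow> diagram \<Rightarrow> ((nat \<times> nat) \<times> (nat \<times> nat)) set" where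
  "glue_conn n P Q = (glue_edges n P Q)\<^sup>*"

definition outer :: "pt \<Rightarrow> nat \<times> nat" where
  "outer p = (if fst p then 2 else 0, snd p)"

text \<open>The product in the Temperley-Lieb monoid (closed loops discarded).\<close>
definition compose :: "nat \<Rightarrow> diagram \<Rightarrow> diagram \<Rightarrow> diagram" where
  "compose n P Q = (\<lambda>p. if p \<in> pts n then
        (THE q. q \<in> pts n \<and> q \<noteq> p \<and> (outer p, outer q) \<in> glue_conn n P Q) else p)"

text \<open>Number of closed loops created by stacking: connected components of the glued
 picture consisting of middle vertices only.\<close>
definition loops :: "nat \<Rightarrow> diagram \<Rightarrow> diagram \<Rightarrow> nat" where
  "loops n P Q = card ((\<lambda>v. glue_conn n P Q `` {v}) `
      {v. fst v = 1 \<and> snd v < n \<and> (\<forall>p\<in>pts n. (v, outer p) \<notin> glue_conn n P Q)})"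

type_synonym ratfun = "rat poly fract"

definition varA :: ratfun where "varA = Fraction_Field.Fract [:0, 1:] 1"

definition laurent :: "ratfun \<Rightarrow> rat fls" where
  "laurent x = (THE L. \<exists>p q. q \<noteq> 0 \<and> x = Fraction_Field.Fract p q \<and>
        L = fps_to_fls (fps_of_poly p) / fps_to_fls (fps_of_poly q))"

definition min_deg :: "ratfun \<Rightarrow> int" where
  "min_deg x = fls_subdegree (laurent x)"

definition loop_val :: ratfun where
  "loop_val = - (varA ^ 2) - (inverse varA) ^ 2"

definition Delta :: "nat \<Rightarrow> ratfun" where
  "Delta m = (-1) ^ m * (varA ^ (2 * (m + 1)) - inverse varA ^ (2 * (m + 1)))
                       / (varA ^ 2 - inverse varA ^ 2)"

text \<open>Elements of TL_n: coefficient functions on diagrams, supported on CM n.\<close>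
type_synonym tl = "diagram \<Rightarrow> ratfun"

definition basis :: "nat \<Rightarrow> diagram \<Rightarrow> tl" where
  "basis n M = (\<lambda>D. if D = M then 1 else 0)"

definition tl_mult :: "nat \<Rightarrow> tl \<Rightarrow> tl \<Rightarrow> tl" where
  "tl_mult n a b = (\<lambda>M. \<Sum>P\<in>CM n. \<Sum>Q\<in>CM n.
      if compose n P Q = M then a P * b Q * loop_val ^ loops n P Q else 0)"

text \<open>x \<mapsto> x \<otimes> id_1 : adds a vertical strand at the right (index n).\<close>
definition tensor1 :: "nat \<Rightarrow> tl \<Rightarrow> tl" where
  "tensor1 n a = (\<lambda>M. if M (False, n) = (True, n)
                       then a (\<lambda>p. if p \<in> pts n then M p else p) else 0)"

fun jw :: "nat \<Rightarrow> tl" where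
  "jw 0 = basis 0 (id_diag 0)"
| "jw (Suc 0) = basis 1 (id_diag 1)"
| "jw (Suc (Suc m)) =
     (let g = tensor1 (Suc m) (jw (Suc m));
          r = Delta m / Delta (Suc m);
          t = tl_mult (Suc (Suc m)) (tl_mult (Suc (Suc m)) g (basis (Suc (Suc m)) (hook (Suc (Suc m)) (Suc m)))) g
      in (\<lambda>M. g M - r * t M))"

definition word_eval :: "nat \<Rightarrow> nat list \<Rightarrow> diagram" where
  "word_eval n w = foldr (\<lambda>i D. compose n (hook n i) D) w (id_diag n)"

definition hook_len :: "nat \<Rightarrow> diagram \<Rightarrow> nat" where
  "hook_len n M = (LEAST k. \<exists>w. length w = k \<and> set w \<subseteq> {1..n-1} \<and> word_eval n w = M)"

end

theory Submission
  imports Defs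
begin


definition lf :: "rat poly \<Rightarrow> rat fls" where "lf p = fps_to_fls (fps_of_poly p)"

lemma lf_add: "lf (p + q) = lf p + lf q" by (simp add: lf_def fps_of_poly_add)
lemma lf_mult: "lf (p * q) = lf p * lf q" by (simp add: lf_def fps_of_poly_mult fls_times_fps_to_fls)
lemma lf_uminus: "lf (- p) = - lf p" by (simp add: lf_def fps_of_poly_uminus)
lemma lf_eq0: "lf p = 0 \<longleftrightarrow> p = 0"
  by (simp add: lf_def)

lemma laurent_Fract: assumes "q \<noteq> 0" shows "laurent (Fraction_Field.Fract p q) = lf p / lf q"
  unfolding laurent_def
proof (rule the_equality)
  show "\<exists>pa qa. qa \<noteq> 0 \<and> Fraction_Field.Fract p q = Fraction_Field.Fract pa qa \<and> lf p / lf q = fps_to_fls (fps_of_poly pa) / fps_to_fls (fps_of_poly qa)"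
    using assms by (auto simp: lf_def)
next
  fix L assume "\<exists>pa qa. qa \<noteq> 0 \<and> Fraction_Field.Fract p q = Fraction_Field.Fract pa qa \<and> L = fps_to_fls (fps_of_poly pa) / fps_to_fls (fps_of_poly qa)"
  then obtain pa qa where h: "qa \<noteq> 0" "Fraction_Field.Fract p q = Fraction_Field.Fract pa qa" "L = lf pa / lf qa"
    by (auto simp: lf_def)
  have "p * qa = pa * q" using h assms by (simp add: eq_fract)
  hence "lf p * lf qa = lf pa * lf q" by (metis lf_mult)
  moreover have "lf q \<noteq> 0" "lf qa \<noteq> 0" using assms h by (auto simp: lf_eq0)
  ultimately show "L = lf p / lf q" using h by (simp add: frac_eq_eq)
qed

lemma laurent_mult: "laurent (x * y) = laurent x * laurent y"
proof (cases x, cases y)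
  fix a b c d assume "x = Fraction_Field.Fract a b" "b \<noteq> 0" "y = Fraction_Field.Fract c d" "d \<noteq> 0"
  thus ?thesis by (simp add: laurent_Fract lf_mult)
qed

lemma laurent_add: "laurent (x + y) = laurent x + laurent y"
proof (cases x, cases y)
  fix a b c d assume "x = Fraction_Field.Fract a b" "b \<noteq> 0" "y = Fraction_Field.Fract c d" "d \<noteq> 0"
  moreover have "lf b \<noteq> 0" "lf d \<noteq> 0" using calculation by (auto simp: lf_eq0)
  ultimately show ?thesis by (simp add: laurent_Fract lf_mult lf_add add_frac_eq mult.commute)
qed

lemma laurent_zero: "laurent 0 = 0"
  by (subst Zero_fract_def) (simp add: laurent_Fract lf_def)

lemma laurent_one: "laurent 1 = 1"
  by (subst One_fract_def) (simp add: laurent_Fract lf_def)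

lemma laurent_uminus: "laurent (- x) = - laurent x"
proof (cases x)
  fix a b assume "x = Fraction_Field.Fract a b" "b \<noteq> 0"
  hence "- x = Fraction_Field.Fract (- a) b" by simp
  hence "laurent (- x) = lf (- a) / lf b" using \<open>b \<noteq> 0\<close> by (simp add: laurent_Fract)
  also have "\<dots> = - (lf a / lf b)" by (simp add: lf_uminus)
  also have "lf a / lf b = laurent x" using \<open>x = _\<close> \<open>b \<noteq> 0\<close> by (simp add: laurent_Fract)
  finally show ?thesis .
qed

lemma laurent_diff: "laurent (x - y) = laurent x - laurent y"
proof -
  have "x - y = x + (- y)" by (rule diff_conv_add_uminus)
  hence "laurent (x - y) = laurent x + laurent (- y)" by (simp only: laurent_add)
  thus ?thesis by (simp only: laurent_uminus diff_conv_add_uminus)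
qed

lemma laurent_eq0: "laurent x = 0 \<longleftrightarrow> x = 0"
proof (cases x)
  fix a b assume xe: "x = Fraction_Field.Fract a b" and b: "b \<noteq> 0"
  have lb: "lf b \<noteq> 0" using b by (auto simp: lf_eq0)
  have "x = 0 \<longleftrightarrow> Fraction_Field.Fract a b = Fraction_Field.Fract 0 1"
    using xe by (metis Zero_fract_def)
  also have "\<dots> \<longleftrightarrow> a = 0" using b by (subst eq_fract(1)) auto
  finally have "x = 0 \<longleftrightarrow> a = 0" .
  thus ?thesis using xe b lb by (simp add: laurent_Fract lf_eq0)
qed

lemma laurent_inverse: "laurent (inverse x) = inverse (laurent x)"
proof (cases "x = 0")
  case True thus ?thesis by (simp add: laurent_zero)
next
  case False
  hence "laurent x * laurent (inverse x) = 1" by (metis laurent_mult laurent_one right_inverse)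
  moreover have "laurent x \<noteq> 0" using False laurent_eq0 by blast
  ultimately show ?thesis by (metis inverse_unique)
qed

lemma laurent_divide: "laurent (x / y) = laurent x / laurent y"
  by (simp add: divide_inverse laurent_mult laurent_inverse)

lemma laurent_power: "laurent (x ^ k) = laurent x ^ k"
  by (induction k) (simp_all add: laurent_one laurent_mult)

lemma laurent_varA: "laurent varA = fls_X"
  by (simp add: varA_def laurent_Fract lf_def)

lemma laurent_neg1_pow: "laurent ((-1) ^ m) = (-1) ^ m"
  by (simp add: laurent_power laurent_uminus laurent_one)

definition good :: "int \<Rightarrow> ratfun \<Rightarrow> bool" where
  "good k x \<longleftrightarrow> x = 0 \<or> k \<le> min_deg x"

lemma good_iff: "good k x \<longleftrightarrow> (\<forall>i<k. fls_nth (laurent x) i = 0)"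
proof
  assume "good k x"
  thus "\<forall>i<k. fls_nth (laurent x) i = 0"
    unfolding good_def min_deg_def by (auto simp: laurent_zero)
next
  assume h: "\<forall>i<k. fls_nth (laurent x) i = 0"
  show "good k x"
  proof (cases "x = 0")
    case False
    hence "laurent x \<noteq> 0" by (simp add: laurent_eq0)
    hence "k \<le> fls_subdegree (laurent x)" using h by (intro fls_subdegree_geI) auto
    thus ?thesis by (simp add: good_def min_deg_def)
  qed (simp add: good_def)
qed

lemma good_zero[simp]: "good k 0" by (simp add: good_def)

lemma good_add: "good k x \<Longrightarrow> good k y \<Longrightarrow> good k (x + y)"
  by (simp add: good_iff laurent_add)

lemma good_diff: "good k x \<Longrightarrow> good k y \<Longrightarrow> good k (x - y)"
  by (simp add: good_iff laurent_diff)

lemma good_mono: "good k x \<Longrightarrow> k' \<le> k \<Longrightarrow> good k' x"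
  by (auto simp: good_def)

lemma good_mult: "good k x \<Longrightarrow> good l y \<Longrightarrow> good (k + l) (x * y)"
proof (cases "x = 0 \<or> y = 0")
  case False
  hence "laurent x \<noteq> 0" "laurent y \<noteq> 0" by (auto simp: laurent_eq0)
  moreover assume "good k x" "good l y"
  ultimately show ?thesis using False
    by (simp add: good_def min_deg_def laurent_mult)
qed auto

lemma good_sum: "finite A \<Longrightarrow> (\<And>a. a \<in> A \<Longrightarrow> good k (f a)) \<Longrightarrow> good k (sum f A)"
  by (induction A rule: finite_induct) (auto intro: good_add)

lemma good_one: "good 0 1" by (simp add: good_def min_deg_def laurent_one)

lemma good_min_deg: "good k x \<Longrightarrow> x \<noteq> 0 \<Longrightarrow> k \<le> min_deg x" by (simp add: good_def)

lemma good_ofmin: "good (min_deg x) x" by (simp add: good_def)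

lemma subdeg_X_minus_Xinv:
  assumes "k > 0"
  shows "(fls_X ^ k - fls_X_inv ^ k :: rat fls) \<noteq> 0 \<and> fls_subdegree (fls_X ^ k - fls_X_inv ^ k :: rat fls) = - int k"
proof -
  have "fls_subdegree (fls_X ^ k - fls_X_inv ^ k :: rat fls) = fls_subdegree (fls_X_inv ^ k :: rat fls)"
    using assms by (intro fls_subdegree_diff_eq2) auto
  moreover have "(fls_X ^ k - fls_X_inv ^ k :: rat fls) \<noteq> 0"
  proof
    assume "(fls_X ^ k - fls_X_inv ^ k :: rat fls) = 0"
    hence "(fls_X ^ k :: rat fls) = fls_X_inv ^ k" by simp
    hence "fls_subdegree (fls_X ^ k :: rat fls) = fls_subdegree (fls_X_inv ^ k :: rat fls)" by simp
    thus False using assms by simp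
  qed
  ultimately show ?thesis by simp
qed

lemma laurent_Delta: "laurent (Delta m) = (-1) ^ m * (fls_X ^ (2 * (m + 1)) - fls_X_inv ^ (2 * (m + 1))) / (fls_X ^ 2 - fls_X_inv ^ 2)"
  by (simp add: Delta_def laurent_mult laurent_divide laurent_diff laurent_power laurent_varA
      laurent_inverse fls_inverse_X laurent_uminus laurent_one)

lemma Delta_props: "laurent (Delta m) \<noteq> 0 \<and> fls_subdegree (laurent (Delta m)) = - 2 * int m"
proof -
  have a: "(fls_X ^ (2 * (m + 1)) - fls_X_inv ^ (2 * (m + 1)) :: rat fls) \<noteq> 0"
     "fls_subdegree (fls_X ^ (2 * (m + 1)) - fls_X_inv ^ (2 * (m + 1)) :: rat fls) = - int (2 * (m+1))"
    using subdeg_X_minus_Xinv[of "2 * (m + 1)"] by auto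
  have b: "(fls_X ^ 2 - fls_X_inv ^ 2 :: rat fls) \<noteq> 0"
     "fls_subdegree (fls_X ^ 2 - fls_X_inv ^ 2 :: rat fls) = - 2"
    using subdeg_X_minus_Xinv[of 2] by auto
  have c: "((-1) ^ m :: rat fls) \<noteq> 0" "fls_subdegree ((-1) ^ m :: rat fls) = 0"
    by (auto simp: fls_subdegree_pow)
  have "(-1) ^ m * (fls_X ^ (2 * (m + 1)) - fls_X_inv ^ (2 * (m + 1))) \<noteq> (0 :: rat fls)"
    using a c by simp
  thus ?thesis using a b c by (simp add: laurent_Delta fls_divide_subdegree)
qed

lemma good_ratio: "good 2 (Delta m / Delta (Suc m))"
proof -
  have "laurent (Delta m / Delta (Suc m)) \<noteq> 0"
    using Delta_props[of m] Delta_props[of "Suc m"] by (simp add: laurent_divide)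
  hence "Delta m / Delta (Suc m) \<noteq> 0" by (metis laurent_zero)
  moreover have "min_deg (Delta m / Delta (Suc m)) = 2"
    using Delta_props[of m] Delta_props[of "Suc m"]
    by (simp add: min_deg_def laurent_divide fls_divide_subdegree)
  ultimately show ?thesis by (simp add: good_def)
qed

lemma loop_val_props: "laurent loop_val \<noteq> 0 \<and> fls_subdegree (laurent loop_val) = -2"
proof -
  have "laurent loop_val = (- (fls_X ^ 2)) - (fls_X_inv ^ 2)"
    by (simp add: loop_val_def laurent_diff laurent_uminus laurent_power laurent_varA laurent_inverse fls_inverse_X)
  also have "\<dots> = - (fls_X ^ 2 + fls_X_inv ^ 2)" by (simp add: minus_add_distrib)
  finally have "laurent loop_val = - (fls_X ^ 2 + fls_X_inv ^ 2)" .
  moreover have "fls_subdegree (fls_X ^ 2 + fls_X_inv ^ 2 :: rat fls) = -2"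
    by (subst fls_subdegree_add_eq2) auto
  moreover have "(fls_X ^ 2 + fls_X_inv ^ 2 :: rat fls) \<noteq> 0"
  proof
    assume "(fls_X ^ 2 + fls_X_inv ^ 2 :: rat fls) = 0"
    hence "fls_subdegree (fls_X ^ 2 + fls_X_inv ^ 2 :: rat fls) = 0" by simp
    with calculation(2) show False by simp
  qed
  ultimately show ?thesis by (simp only: fls_uminus_subdegree neg_equal_0_iff_equal) simp
qed

lemma good_loop_pow: "good (- 2 * int k) (loop_val ^ k)"
proof -
  have "laurent (loop_val ^ k) \<noteq> 0" using loop_val_props by (simp add: laurent_power)
  hence "loop_val ^ k \<noteq> 0" by (metis laurent_zero)
  moreover have "min_deg (loop_val ^ k) = - 2 * int k"
    using loop_val_props by (simp add: min_deg_def laurent_power fls_subdegree_pow)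
  ultimately show ?thesis by (simp add: good_def)
qed


lemma even_card_inv:
  assumes "finite A" "\<And>x. x \<in> A \<Longrightarrow> f x \<in> A \<and> f x \<noteq> x \<and> f (f x) = x"
  shows "even (card A)"
  using assms
proof (induction "card A" arbitrary: A rule: less_induct)
  case less
  show ?case
  proof (cases "A = {}")
    case False
    then obtain x where x: "x \<in> A" by blast
    let ?B = "A - {x, f x}"
    have fx: "f x \<in> A" "f x \<noteq> x" using less.prems x by auto
    have cB: "card A = card ?B + 2"
    proof -
      have "{x, f x} \<subseteq> A" using fx x by auto
      hence "card ?B = card A - card {x, f x}" using less.prems(1) by (simp add: card_Diff_subset)
      moreover have "card {x, f x} = 2" using fx(2) by simp
      moreover have "card {x, f x} \<le> card A" using \<open>{x, f x} \<subseteq> A\<close> card_mono[OF less.prems(1)] by blast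
      ultimately show ?thesis by simp
    qed
    have "even (card ?B)"
    proof (rule less.hyps)
      show "card ?B < card A" using cB by simp
      show "finite ?B" using less.prems by simp
      fix y assume y: "y \<in> ?B"
      hence "f y \<noteq> x" using less.prems(2) x by (metis DiffD1 DiffD2 insertCI)
      moreover have "f y \<noteq> f x" using less.prems(2) x y by (metis DiffD1 DiffD2 insertCI)
      ultimately show "f y \<in> ?B \<and> f y \<noteq> y \<and> f (f y) = y" using less.prems(2) y by auto
    qed
    thus ?thesis using cB by simp
  qed simp
qed

lemma CM_D: "D \<in> CM n \<Longrightarrow> p \<in> pts n \<Longrightarrow> D p \<in> pts n \<and> D p \<noteq> p \<and> D (D p) = p"
  by (simp add: CM_def)

lemma CM_out: "D \<in> CM n \<Longrightarrow> p \<notin> pts n \<Longrightarrow> D p = p"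
  by (cases p) (simp add: CM_def)

lemma pts_iff: "p \<in> pts n \<longleftrightarrow> snd p < n" by (simp add: pts_def)

locale two =
  fixes n :: nat and P Q :: diagram
  assumes P: "P \<in> CM n" and Q: "Q \<in> CM n"
begin

abbreviation E where "E \<equiv> glue_edges n P Q"
abbreviation C where "C \<equiv> glue_conn n P Q"

definition V01 :: "(nat \<times> nat) set" where "V01 = {v. fst v \<le> 1 \<and> snd v < n}"
definition V12 :: "(nat \<times> nat) set" where "V12 = {v. 1 \<le> fst v \<and> fst v \<le> 2 \<and> snd v < n}"
definition unlow :: "nat \<times> nat \<Rightarrow> pt" where "unlow v = (fst v = 1, snd v)"
definition unup :: "nat \<times> nat \<Rightarrow> pt" where "unup v = (fst v = 2, snd v)"
definition NP where "NP v = lowlift (P (unlow v))"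
definition NQ where "NQ v = uplift (Q (unup v))"

lemma lowlift_unlow: "v \<in> V01 \<Longrightarrow> lowlift (unlow v) = v"
  by (cases v) (auto simp: V01_def lowlift_def unlow_def)
lemma unlow_lowlift[simp]: "unlow (lowlift p) = p"
  by (cases p) (auto simp: lowlift_def unlow_def)
lemma uplift_unup: "v \<in> V12 \<Longrightarrow> uplift (unup v) = v"
  by (cases v) (auto simp: V12_def uplift_def unup_def)
lemma unup_uplift[simp]: "unup (uplift p) = p"
  by (cases p) (auto simp: uplift_def unup_def)
lemma lowlift_V01: "p \<in> pts n \<Longrightarrow> lowlift p \<in> V01"
  by (auto simp: V01_def lowlift_def pts_def)
lemma uplift_V12: "p \<in> pts n \<Longrightarrow> uplift p \<in> V12"
  by (auto simp: V12_def uplift_def pts_def)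
lemma unlow_pts: "v \<in> V01 \<Longrightarrow> unlow v \<in> pts n"
  by (auto simp: V01_def unlow_def pts_def)
lemma unup_pts: "v \<in> V12 \<Longrightarrow> unup v \<in> pts n"
  by (auto simp: V12_def unup_def pts_def)
lemma snd_lowlift[simp]: "snd (lowlift p) = snd p" by (simp add: lowlift_def)
lemma snd_uplift[simp]: "snd (uplift p) = snd p" by (simp add: uplift_def)
lemma snd_unlow[simp]: "snd (unlow p) = snd p" by (simp add: unlow_def)
lemma snd_unup[simp]: "snd (unup p) = snd p" by (simp add: unup_def)
lemma snd_outer[simp]: "snd (outer p) = snd p" by (simp add: outer_def)

lemma NP_props: "v \<in> V01 \<Longrightarrow> NP v \<in> V01 \<and> NP v \<noteq> v \<and> NP (NP v) = v"
proof -
  assume v: "v \<in> V01"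
  have u: "unlow v \<in> pts n" using v by (rule unlow_pts)
  have "P (unlow v) \<in> pts n" "P (unlow v) \<noteq> unlow v" "P (P (unlow v)) = unlow v"
    using CM_D[OF P u] by auto
  thus ?thesis using v
    by (auto simp: NP_def lowlift_unlow lowlift_V01) (metis lowlift_unlow unlow_lowlift)
qed

lemma NQ_props: "v \<in> V12 \<Longrightarrow> NQ v \<in> V12 \<and> NQ v \<noteq> v \<and> NQ (NQ v) = v"
proof -
  assume v: "v \<in> V12"
  have u: "unup v \<in> pts n" using v by (rule unup_pts)
  have "Q (unup v) \<in> pts n" "Q (unup v) \<noteq> unup v" "Q (Q (unup v)) = unup v"
    using CM_D[OF Q u] by auto
  thus ?thesis using v
    by (auto simp: NQ_def uplift_unup uplift_V12) (metis uplift_unup unup_uplift)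
qed

lemma E_iff: "(u, w) \<in> E \<longleftrightarrow> (u \<in> V01 \<and> w = NP u) \<or> (u \<in> V12 \<and> w = NQ u)"
proof
  assume "(u, w) \<in> E"
  then obtain p where "p \<in> pts n" "(u = lowlift p \<and> w = lowlift (P p)) \<or> (u = uplift p \<and> w = uplift (Q p))"
    unfolding glue_edges_def by blast
  thus "(u \<in> V01 \<and> w = NP u) \<or> (u \<in> V12 \<and> w = NQ u)"
    by (auto simp: NP_def NQ_def lowlift_V01 uplift_V12)
next
  assume "(u \<in> V01 \<and> w = NP u) \<or> (u \<in> V12 \<and> w = NQ u)"
  thus "(u, w) \<in> E"
  proof
    assume h: "u \<in> V01 \<and> w = NP u"
    hence "u = lowlift (unlow u)" "w = lowlift (P (unlow u))" "unlow u \<in> pts n"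
      by (auto simp: lowlift_unlow NP_def unlow_pts)
    thus ?thesis unfolding glue_edges_def by blast
  next
    assume h: "u \<in> V12 \<and> w = NQ u"
    hence "u = uplift (unup u)" "w = uplift (Q (unup u))" "unup u \<in> pts n"
      by (auto simp: uplift_unup NQ_def unup_pts)
    thus ?thesis unfolding glue_edges_def by blast
  qed
qed

lemma E_sym: "(u, w) \<in> E \<Longrightarrow> (w, u) \<in> E"
proof -
  assume "(u, w) \<in> E"
  hence "(u \<in> V01 \<and> w = NP u) \<or> (u \<in> V12 \<and> w = NQ u)" by (simp add: E_iff)
  thus ?thesis
  proof
    assume h: "u \<in> V01 \<and> w = NP u"
    hence "w \<in> V01 \<and> u = NP w" using NP_props[of u] by auto
    thus ?thesis by (simp add: E_iff)
  next
    assume h: "u \<in> V12 \<and> w = NQ u"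
    hence "w \<in> V12 \<and> u = NQ w" using NQ_props[of u] by auto
    thus ?thesis by (simp add: E_iff)
  qed
qed

lemma C_sym: "(u, w) \<in> C \<Longrightarrow> (w, u) \<in> C"
  unfolding glue_conn_def
proof (induction rule: rtrancl_induct)
  case (step y z)
  hence "(z, y) \<in> E" by (simp add: E_sym)
  thus ?case using step by (meson converse_rtrancl_into_rtrancl)
qed simp

lemma C_trans: "(u, v) \<in> C \<Longrightarrow> (v, w) \<in> C \<Longrightarrow> (u, w) \<in> C"
  unfolding glue_conn_def by simp

lemma C_refl: "(u, u) \<in> C" unfolding glue_conn_def by simp

lemma E_C: "(u, w) \<in> E \<Longrightarrow> (u, w) \<in> C" unfolding glue_conn_def by simp

lemma V01_iff: "v \<in> V01 \<longleftrightarrow> fst v \<le> 1 \<and> snd v < n" by (simp add: V01_def)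
lemma V12_iff: "v \<in> V12 \<longleftrightarrow> 1 \<le> fst v \<and> fst v \<le> 2 \<and> snd v < n" by (simp add: V12_def)

lemma NP_snd_lt: "v \<in> V01 \<Longrightarrow> snd (NP v) < n" using NP_props by (auto simp: V01_iff)
lemma NQ_snd_lt: "v \<in> V12 \<Longrightarrow> snd (NQ v) < n" using NQ_props by (auto simp: V12_iff)

lemma NQ_level: "v \<in> V12 \<Longrightarrow> fst (NQ v) \<noteq> 0" using NQ_props[of v] by (auto simp: V12_iff)
lemma NP_level: "v \<in> V01 \<Longrightarrow> fst (NP v) \<noteq> 2" using NP_props[of v] by (auto simp: V01_iff)

definition nxt :: "(nat \<times> nat) \<times> bool \<Rightarrow> (nat \<times> nat) \<times> bool" where
  "nxt d = ((if snd d then NP (fst d) else NQ (fst d)), \<not> snd d)"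

definition valid :: "(nat \<times> nat) \<times> bool \<Rightarrow> bool" where
  "valid d \<longleftrightarrow> (snd d \<longrightarrow> fst d \<in> V01) \<and> (\<not> snd d \<longrightarrow> fst d \<in> V12)"

definition lvl1 :: "(nat \<times> nat) \<times> bool \<Rightarrow> bool" where
  "lvl1 d \<longleftrightarrow> fst (fst d) = 1"

lemma nxt_valid: assumes "valid d" "lvl1 (nxt d)" shows "valid (nxt d)"
proof (cases d)
  case (Pair v c)
  show ?thesis
  proof (cases c)
    case True
    hence "v \<in> V01" using assms Pair by (simp add: valid_def)
    hence "NP v \<in> V01" using NP_props by blast
    moreover have "fst (NP v) = 1" using assms(2) Pair True by (simp add: lvl1_def nxt_def)
    ultimately show ?thesis using Pair True by (simp add: valid_def nxt_def V01_iff V12_iff)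
  next
    case False
    hence "v \<in> V12" using assms Pair by (simp add: valid_def)
    hence "NQ v \<in> V12" using NQ_props by blast
    moreover have "fst (NQ v) = 1" using assms(2) Pair False by (simp add: lvl1_def nxt_def)
    ultimately show ?thesis using Pair False by (simp add: valid_def nxt_def V01_iff V12_iff)
  qed
qed

lemma nxt_in: assumes "valid d" shows "snd (fst (nxt d)) < n \<and> fst (fst (nxt d)) \<le> 2"
proof (cases d)
  case (Pair v c)
  show ?thesis
  proof (cases c)
    case True
    hence "v \<in> V01" using assms Pair by (simp add: valid_def)
    hence "NP v \<in> V01" using NP_props by blast
    thus ?thesis using Pair True by (simp add: nxt_def V01_iff)
  next
    case False
    hence "v \<in> V12" using assms Pair by (simp add: valid_def)
    hence "NQ v \<in> V12" using NQ_props by blast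
    thus ?thesis using Pair False by (simp add: nxt_def V12_iff)
  qed
qed

lemma nxt_inj: assumes "valid d" "valid d'" "nxt d = nxt d'" shows "d = d'"
proof (cases d, cases d')
  fix v c v' c' assume d: "d = (v, c)" and d': "d' = (v', c')"
  have cc: "c = c'" using assms(3) d d' by (simp add: nxt_def)
  show ?thesis
  proof (cases c)
    case True
    hence "v \<in> V01" "v' \<in> V01" using assms d d' cc by (auto simp: valid_def)
    moreover have "NP v = NP v'" using assms(3) d d' cc True by (simp add: nxt_def)
    ultimately have "v = v'" using NP_props by metis
    thus ?thesis using d d' cc by simp
  next
    case False
    hence "v \<in> V12" "v' \<in> V12" using assms d d' cc by (auto simp: valid_def)
    moreover have "NQ v = NQ v'" using assms(3) d d' cc False by (simp add: nxt_def)
    ultimately have "v = v'" using NQ_props by metis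
    thus ?thesis using d d' cc by simp
  qed
qed

definition d0 :: "pt \<Rightarrow> (nat \<times> nat) \<times> bool" where "d0 p = (outer p, \<not> fst p)"

definition W :: "pt \<Rightarrow> nat \<Rightarrow> (nat \<times> nat) \<times> bool" where "W p k = (nxt ^^ k) (d0 p)"

lemma W_0: "W p 0 = d0 p" by (simp add: W_def)
lemma W_Suc: "W p (Suc k) = nxt (W p k)" by (simp add: W_def)

lemma d0_valid: "p \<in> pts n \<Longrightarrow> valid (d0 p)"
  by (cases p) (auto simp: d0_def valid_def outer_def V01_iff V12_iff pts_iff)

lemma d0_not_lvl1: "\<not> lvl1 (d0 p)"
  by (cases p) (auto simp: d0_def lvl1_def outer_def)

lemma W_valid: "p \<in> pts n \<Longrightarrow> (\<And>i. 0 < i \<Longrightarrow> i \<le> k \<Longrightarrow> lvl1 (W p i)) \<Longrightarrow> valid (W p k)"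
proof (induction k)
  case 0 thus ?case by (simp add: W_0 d0_valid)
next
  case (Suc k)
  hence "valid (W p k)" by simp
  moreover have "lvl1 (nxt (W p k))" using Suc.prems(2)[of "Suc k"] by (simp add: W_Suc)
  ultimately show ?case by (simp add: W_Suc nxt_valid)
qed

lemma W_terminates: assumes p: "p \<in> pts n" shows "\<exists>k. 0 < k \<and> \<not> lvl1 (W p k)"
proof (rule ccontr)
  assume "\<not> ?thesis"
  hence all: "\<And>k. 0 < k \<Longrightarrow> lvl1 (W p k)" by blast
  hence vk: "\<And>k. valid (W p k)" using W_valid[OF p] by blast
  define D where "D = {v::nat\<times>nat. fst v \<le> 2 \<and> snd v < n} \<times> (UNIV :: bool set)"
  have finD: "finite D"
  proof -
    have "{v::nat\<times>nat. fst v \<le> 2 \<and> snd v < n} \<subseteq> {..2} \<times> {..<n}" by auto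
    hence "finite {v::nat\<times>nat. fst v \<le> 2 \<and> snd v < n}" by (rule finite_subset) simp
    thus ?thesis by (simp add: D_def)
  qed
  have inD: "W p k \<in> D" for k
    using vk[of k] by (cases "W p k") (auto simp: D_def valid_def V01_iff V12_iff)
  have "\<not> inj_on (W p) {..card D}"
  proof
    assume "inj_on (W p) {..card D}"
    hence "card (W p ` {..card D}) = card {..card D}" by (rule card_image)
    moreover have "card (W p ` {..card D}) \<le> card D"
      using inD finD by (intro card_mono) auto
    ultimately show False by simp
  qed
  then obtain i j where ij: "i \<le> card D" "j \<le> card D" "i \<noteq> j" "W p i = W p j"
    unfolding inj_on_def by blast
  define S where "S = {i. \<exists>j. i < j \<and> W p i = W p j}"
  have "\<exists>i. i \<in> S"
  proof (cases "i < j")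
    case True thus ?thesis using ij unfolding S_def by blast
  next
    case False hence "j < i" using ij by simp
    thus ?thesis using ij unfolding S_def by (metis (mono_tags, lifting) mem_Collect_eq)
  qed
  then obtain i' where "i' \<in> S" by blast
  define i0 where "i0 = (LEAST i. i \<in> S)"
  have i0: "i0 \<in> S" "\<And>i. i \<in> S \<Longrightarrow> i0 \<le> i"
    unfolding i0_def using \<open>i' \<in> S\<close> by (auto intro: LeastI Least_le)
  then obtain j0 where j0: "i0 < j0" "W p i0 = W p j0" unfolding S_def by blast
  show False
  proof (cases i0)
    case 0
    hence "lvl1 (W p j0)" using all j0 by simp
    thus False using j0 0 d0_not_lvl1[of p] by (simp add: W_0)
  next
    case (Suc i1)
    then obtain j1 where "j0 = Suc j1" using j0 by (cases j0) auto
    hence "nxt (W p i1) = nxt (W p j1)" using j0 Suc by (simp add: W_Suc)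
    hence "W p i1 = W p j1" using vk nxt_inj by blast
    hence "i1 \<in> S" unfolding S_def using \<open>j0 = Suc j1\<close> Suc j0 by auto
    thus False using i0 Suc by fastforce
  qed
qed

definition mstop :: "pt \<Rightarrow> nat" where "mstop p = (LEAST k. 0 < k \<and> \<not> lvl1 (W p k))"

lemma mstop_props:
  assumes p: "p \<in> pts n"
  shows "0 < mstop p" "\<not> lvl1 (W p (mstop p))" "\<And>k. 0 < k \<Longrightarrow> k < mstop p \<Longrightarrow> lvl1 (W p k)"
proof -
  obtain k where "0 < k \<and> \<not> lvl1 (W p k)" using W_terminates[OF p] by blast
  hence h: "0 < mstop p \<and> \<not> lvl1 (W p (mstop p))" unfolding mstop_def by (rule LeastI)
  thus "0 < mstop p" "\<not> lvl1 (W p (mstop p))" by auto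
  fix k assume "0 < k" "k < mstop p"
  thus "lvl1 (W p k)" unfolding mstop_def using not_less_Least by blast
qed

lemma W_valid_before: assumes "p \<in> pts n" "k < mstop p" shows "valid (W p k)"
proof (rule W_valid[OF assms(1)])
  fix i assume "0 < i" "i \<le> k"
  thus "lvl1 (W p i)" using mstop_props(3)[OF assms(1)] assms(2) by simp
qed

lemma W_in: "p \<in> pts n \<Longrightarrow> k \<le> mstop p \<Longrightarrow> snd (fst (W p k)) < n \<and> fst (fst (W p k)) \<le> 2"
proof (cases k)
  case 0
  assume "p \<in> pts n"
  thus ?thesis using 0 by (cases p) (auto simp: W_0 d0_def outer_def pts_iff)
next
  case (Suc k')
  assume p: "p \<in> pts n" and "k \<le> mstop p"
  hence "valid (W p k')" using Suc W_valid_before by simp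
  thus ?thesis using Suc by (simp add: W_Suc nxt_in)
qed

definition vtx where "vtx p k = fst (W p k)"

lemma W_edge: "p \<in> pts n \<Longrightarrow> k < mstop p \<Longrightarrow> (vtx p k, vtx p (Suc k)) \<in> E"
proof -
  assume p: "p \<in> pts n" and k: "k < mstop p"
  have v: "valid (W p k)" using W_valid_before[OF p k] .
  show ?thesis using v by (cases "W p k") (auto simp: vtx_def W_Suc nxt_def E_iff valid_def)
qed

lemma W_reach: "p \<in> pts n \<Longrightarrow> k \<le> mstop p \<Longrightarrow> (outer p, vtx p k) \<in> C"
proof (induction k)
  case 0 thus ?case by (simp add: vtx_def W_0 d0_def C_refl)
next
  case (Suc k)
  hence "(outer p, vtx p k) \<in> C" by simp
  moreover have "(vtx p k, vtx p (Suc k)) \<in> E" using Suc.prems by (intro W_edge) auto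
  ultimately show ?case using E_C C_trans by blast
qed

definition Sw where "Sw p = vtx p ` {..mstop p}"

lemma vtx_0: "vtx p 0 = outer p" by (simp add: vtx_def W_0 d0_def)

lemma neighbors_outer0: "fst u = 0 \<Longrightarrow> (u, w) \<in> E \<Longrightarrow> w = NP u"
  by (auto simp: E_iff V12_iff)
lemma neighbors_outer2: "fst u = 2 \<Longrightarrow> (u, w) \<in> E \<Longrightarrow> w = NQ u"
  by (auto simp: E_iff V01_iff)

lemma Sw_closed:
  assumes p: "p \<in> pts n" and u: "u \<in> Sw p" and e: "(u, w) \<in> E"
  shows "w \<in> Sw p"
proof -
  let ?m = "mstop p"
  obtain k where k: "k \<le> ?m" "u = vtx p k" using u unfolding Sw_def by auto
  have m0: "0 < ?m" using mstop_props[OF p] by simp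
  have step: "vtx p (Suc i) = (if snd (W p i) then NP (vtx p i) else NQ (vtx p i))" for i
    by (simp add: vtx_def W_Suc nxt_def)
  have col: "snd (W p (Suc i)) = (\<not> snd (W p i))" for i by (simp add: W_Suc nxt_def)
  have in1: "vtx p 1 \<in> Sw p" using m0 unfolding Sw_def by force
  show ?thesis
  proof (cases "k = 0")
    case True
    hence u0: "u = outer p" using k by (simp add: vtx_0)
    have c0: "snd (W p 0) = (\<not> fst p)" by (simp add: W_0 d0_def)
    have "w = vtx p 1"
    proof (cases "fst p")
      case True
      hence "fst u = 2" using u0 by (simp add: outer_def)
      hence "w = NQ u" using e by (rule neighbors_outer2)
      thus ?thesis using step[of 0] c0 True u0 by (simp add: vtx_0)
    next
      case False
      hence "fst u = 0" using u0 by (simp add: outer_def)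
      hence "w = NP u" using e by (rule neighbors_outer0)
      thus ?thesis using step[of 0] c0 False u0 by (simp add: vtx_0)
    qed
    thus ?thesis using in1 by simp
  next
    case False
    then obtain k' where k': "k = Suc k'" by (cases k) auto
    have vk': "valid (W p k')" using W_valid_before[OF p] k k' by simp
    have stepk: "vtx p k = (if snd (W p k') then NP (vtx p k') else NQ (vtx p k'))" using step k' by simp
    have prev: "(if snd (W p k) then NQ (vtx p k) else NP (vtx p k)) = vtx p k'"
    proof (cases "snd (W p k')")
      case True
      hence "vtx p k' \<in> V01" using vk' by (simp add: valid_def vtx_def)
      thus ?thesis using True stepk col[of k'] k' NP_props[of "vtx p k'"] by simp
    next
      case False
      hence "vtx p k' \<in> V12" using vk' by (simp add: valid_def vtx_def)
      thus ?thesis using False stepk col[of k'] k' NQ_props[of "vtx p k'"] by simp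
    qed
    have ink': "vtx p k' \<in> Sw p" using k k' unfolding Sw_def by auto
    show ?thesis
    proof (cases "k = ?m")
      case True
      have nl: "fst u \<noteq> 1" using True mstop_props(2)[OF p] k by (simp add: lvl1_def vtx_def)
      have "w = vtx p k'"
      proof (cases "snd (W p k')")
        case True
        hence "vtx p k' \<in> V01" using vk' by (simp add: valid_def vtx_def)
        hence "NP (vtx p k') \<in> V01" using NP_props by blast
        hence "u \<in> V01" using stepk True k by simp
        hence "fst u = 0" using nl by (simp add: V01_iff)
        hence "w = NP u" using e by (rule neighbors_outer0)
        moreover have "\<not> snd (W p k)" using True col[of k'] k' by simp
        ultimately show ?thesis using prev k by simp
      next
        case False
        hence "vtx p k' \<in> V12" using vk' by (simp add: valid_def vtx_def)
        hence "NQ (vtx p k') \<in> V12" using NQ_props by blast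
        hence "u \<in> V12" using stepk False k by simp
        hence "fst u = 2" using nl by (simp add: V12_iff)
        hence "w = NQ u" using e by (rule neighbors_outer2)
        moreover have "snd (W p k)" using False col[of k'] k' by simp
        ultimately show ?thesis using prev k by simp
      qed
      thus ?thesis using ink' by simp
    next
      case False
      hence km: "k < ?m" using k by simp
      have "w = NP u \<or> w = NQ u" using e by (auto simp: E_iff)
      hence "w = vtx p k' \<or> w = vtx p (Suc k)"
        using prev step[of k] k by (cases "snd (W p k)") auto
      moreover have "vtx p (Suc k) \<in> Sw p" using km unfolding Sw_def by auto
      ultimately show ?thesis using ink' by auto
    qed
  qed
qed

lemma C_in_Sw: assumes p: "p \<in> pts n" and c: "(outer p, w) \<in> C" shows "w \<in> Sw p"
  using c unfolding glue_conn_def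
proof (induction rule: rtrancl_induct)
  case base
  have "vtx p 0 \<in> Sw p" unfolding Sw_def by auto
  thus ?case by (simp add: vtx_0)
next
  case (step y z) thus ?case using Sw_closed[OF p] by blast
qed

lemma Sw_lvl1: assumes p: "p \<in> pts n" and w: "w \<in> Sw p" and l: "fst w \<noteq> 1"
  shows "w = outer p \<or> w = vtx p (mstop p)"
proof -
  obtain k where k: "k \<le> mstop p" "w = vtx p k" using w unfolding Sw_def by auto
  show ?thesis
  proof (cases "k = 0 \<or> k = mstop p")
    case True thus ?thesis using k vtx_0[of p] by auto
  next
    case False
    hence "lvl1 (W p k)" using mstop_props(3)[OF p, of k] k by simp
    hence False using l k by (simp add: lvl1_def vtx_def)
    thus ?thesis ..
  qed
qed

lemma Sw_sub: assumes "p \<in> pts n" "w \<in> Sw p" shows "snd w < n \<and> fst w \<le> 2"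
proof -
  obtain k where "k \<le> mstop p" "w = vtx p k" using assms(2) unfolding Sw_def by auto
  thus ?thesis using W_in[OF assms(1)] by (simp add: vtx_def)
qed

definition endpt :: "pt \<Rightarrow> pt" where
  "endpt p = (fst (vtx p (mstop p)) = 2, snd (vtx p (mstop p)))"

lemma outer_endpt: assumes p: "p \<in> pts n" shows "outer (endpt p) = vtx p (mstop p)"
proof -
  have "fst (vtx p (mstop p)) \<noteq> 1" using mstop_props(2)[OF p] by (simp add: lvl1_def vtx_def)
  moreover have "fst (vtx p (mstop p)) \<le> 2" using W_in[OF p, of "mstop p"] by (simp add: vtx_def)
  ultimately show ?thesis by (cases "vtx p (mstop p)") (auto simp: endpt_def outer_def)
qed

lemma endpt_pts: "p \<in> pts n \<Longrightarrow> endpt p \<in> pts n"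
  using W_in[of p "mstop p"] by (simp add: endpt_def pts_iff vtx_def)

lemma outer_inj: "outer p = outer q \<Longrightarrow> p = q"
  by (cases p; cases q) (auto simp: outer_def split: if_splits)

lemma Sw_finite: "finite (Sw p)" unfolding Sw_def by simp

lemma even_V01: assumes p: "p \<in> pts n" shows "even (card (Sw p \<inter> V01))"
proof (rule even_card_inv[where f = NP])
  show "finite (Sw p \<inter> V01)" using Sw_finite by simp
  fix x assume x: "x \<in> Sw p \<inter> V01"
  hence "(x, NP x) \<in> E" by (simp add: E_iff)
  hence "NP x \<in> Sw p" using Sw_closed[OF p] x by blast
  thus "NP x \<in> Sw p \<inter> V01 \<and> NP x \<noteq> x \<and> NP (NP x) = x" using NP_props[of x] x by auto
qed

lemma even_V12: assumes p: "p \<in> pts n" shows "even (card (Sw p \<inter> V12))"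
proof (rule even_card_inv[where f = NQ])
  show "finite (Sw p \<inter> V12)" using Sw_finite by simp
  fix x assume x: "x \<in> Sw p \<inter> V12"
  hence "(x, NQ x) \<in> E" by (simp add: E_iff)
  hence "NQ x \<in> Sw p" using Sw_closed[OF p] x by blast
  thus "NQ x \<in> Sw p \<inter> V12 \<and> NQ x \<noteq> x \<and> NQ (NQ x) = x" using NQ_props[of x] x by auto
qed

lemma endpt_ne: assumes p: "p \<in> pts n" shows "endpt p \<noteq> p"
proof
  assume eq: "endpt p = p"
  let ?S = "Sw p"
  define S0 where "S0 = {w \<in> ?S. fst w = 0}"
  define S1 where "S1 = {w \<in> ?S. fst w = 1}"
  define S2 where "S2 = {w \<in> ?S. fst w = 2}"
  have fin: "finite S0" "finite S1" "finite S2" using Sw_finite unfolding S0_def S1_def S2_def by auto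
  have a: "?S \<inter> V01 = S0 \<union> S1" using Sw_sub[OF p] unfolding S0_def S1_def V01_def by auto
  have le2: "\<forall>w\<in>?S. fst w \<le> 2 \<and> snd w < n" using Sw_sub[OF p] by blast
  have b: "?S \<inter> V12 = S1 \<union> S2" using le2 unfolding S2_def S1_def V12_def by force
  have ca: "card (?S \<inter> V01) = card S0 + card S1" unfolding a using fin
    by (intro card_Un_disjoint) (auto simp: S0_def S1_def)
  have cb: "card (?S \<inter> V12) = card S1 + card S2" unfolding b using fin
    by (intro card_Un_disjoint) (auto simp: S2_def S1_def)
  have o: "outer p \<in> ?S" unfolding Sw_def using vtx_0[of p] by force
  have "S0 \<union> S2 \<subseteq> {outer p}"
  proof
    fix w assume "w \<in> S0 \<union> S2"
    hence "w \<in> ?S" "fst w \<noteq> 1" unfolding S0_def S2_def by auto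
    hence "w = outer p \<or> w = vtx p (mstop p)" using Sw_lvl1[OF p] by blast
    thus "w \<in> {outer p}" using outer_endpt[OF p] eq by auto
  qed
  moreover have "outer p \<in> S0 \<union> S2" using o by (cases p) (auto simp: S0_def S2_def outer_def)
  ultimately have "S0 \<union> S2 = {outer p}" by blast
  moreover have "S0 \<inter> S2 = {}" by (auto simp: S0_def S2_def)
  ultimately have "card S0 + card S2 = 1"
    using fin card_Un_disjoint[of S0 S2] by simp
  moreover have "even (card S0 + card S1)" "even (card S1 + card S2)"
    using even_V01[OF p] even_V12[OF p] ca cb by auto
  ultimately show False by presburger
qed

lemma endpt_reach: "p \<in> pts n \<Longrightarrow> (outer p, outer (endpt p)) \<in> C"
  using W_reach[of p "mstop p"] outer_endpt by simp

lemma endpt_uniq: assumes p: "p \<in> pts n" and c: "(outer p, outer q) \<in> C"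
  shows "q = p \<or> q = endpt p"
proof -
  have "outer q \<in> Sw p" using C_in_Sw[OF p c] .
  moreover have "fst (outer q) \<noteq> 1" by (simp add: outer_def)
  ultimately have "outer q = outer p \<or> outer q = outer (endpt p)"
    using Sw_lvl1[OF p] outer_endpt[OF p] by metis
  thus ?thesis using outer_inj by blast
qed

lemma compose_eq: assumes p: "p \<in> pts n" shows "compose n P Q p = endpt p"
proof -
  have "(THE q. q \<in> pts n \<and> q \<noteq> p \<and> (outer p, outer q) \<in> C) = endpt p"
  proof (rule the_equality)
    show "endpt p \<in> pts n \<and> endpt p \<noteq> p \<and> (outer p, outer (endpt p)) \<in> C"
      using endpt_pts[OF p] endpt_ne[OF p] endpt_reach[OF p] by simp
    fix q assume "q \<in> pts n \<and> q \<noteq> p \<and> (outer p, outer q) \<in> C"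
    thus "q = endpt p" using endpt_uniq[OF p] by blast
  qed
  thus ?thesis using p by (simp add: compose_def)
qed

lemma compose_props: assumes p: "p \<in> pts n"
  shows "compose n P Q p \<in> pts n" "compose n P Q p \<noteq> p" "(outer p, outer (compose n P Q p)) \<in> C"
  using compose_eq[OF p] endpt_pts[OF p] endpt_ne[OF p] endpt_reach[OF p] by auto

lemma compose_uniq: assumes p: "p \<in> pts n" and q: "q \<in> pts n" and "q \<noteq> p"
  and "(outer p, outer q) \<in> C" shows "q = compose n P Q p"
  using endpt_uniq[OF p assms(4)] assms(3) compose_eq[OF p] by simp

end


definition cr :: "nat \<Rightarrow> nat \<Rightarrow> diagram \<Rightarrow> nat" where
  "cr n j D = card {p \<in> pts n. snd p < j \<and> j \<le> snd (D p)}"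

definition Phi :: "nat \<Rightarrow> diagram \<Rightarrow> nat" where
  "Phi n D = (\<Sum>j\<le>n. cr n j D)"

lemma finite_pts: "finite (pts n)"
proof -
  have "pts n \<subseteq> UNIV \<times> {..<n}" by (auto simp: pts_def)
  thus ?thesis by (rule finite_subset) simp
qed

context two
begin

definition comp :: "nat \<times> nat \<Rightarrow> (nat \<times> nat) set" where "comp v = C `` {v}"

lemma comp_eq: "(x, y) \<in> C \<Longrightarrow> comp x = comp y"
  unfolding comp_def using C_sym C_trans by blast

lemma comp_self: "x \<in> comp x" unfolding comp_def using C_refl by blast

lemma in_comp: "y \<in> comp x \<longleftrightarrow> (x, y) \<in> C" unfolding comp_def by blast

lemma cross_edge:
  assumes "(x, y) \<in> C" "snd x < j" "j \<le> snd y"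
  shows "\<exists>u w. (x, u) \<in> C \<and> (u, w) \<in> E \<and> snd u < j \<and> j \<le> snd w"
  using assms unfolding glue_conn_def
proof (induction rule: rtrancl_induct)
  case base thus ?case by simp
next
  case (step y' z)
  show ?case
  proof (cases "snd y' < j")
    case True thus ?thesis using step by blast
  next
    case False thus ?thesis using step by auto
  qed
qed

definition LoopSet where
  "LoopSet = {v. fst v = 1 \<and> snd v < n \<and> (\<forall>p\<in>pts n. (v, outer p) \<notin> C)}"

definition LComps where "LComps = comp ` LoopSet"

lemma loops_eq: "loops n P Q = card LComps"
  unfolding loops_def LComps_def LoopSet_def comp_def by simp

lemma C_V: "(x, y) \<in> C \<Longrightarrow> fst x \<le> 2 \<Longrightarrow> snd x < n \<Longrightarrow> fst y \<le> 2 \<and> snd y < n"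
  unfolding glue_conn_def
proof (induction rule: rtrancl_induct)
  case (step y z)
  thus ?case using NP_props[of y] NQ_props[of y] by (auto simp: E_iff V01_iff V12_iff)
qed simp

lemma LoopSet_comp:
  assumes v0: "v0 \<in> LoopSet" and v: "v \<in> comp v0"
  shows "fst v = 1 \<and> snd v < n"
proof -
  have c: "(v0, v) \<in> C" using v by (simp add: in_comp)
  have "fst v \<le> 2 \<and> snd v < n" using C_V[OF c] v0 by (simp add: LoopSet_def)
  moreover have "fst v = 1"
  proof (rule ccontr)
    assume "fst v \<noteq> 1"
    with calculation have "v = outer (fst v = 2, snd v)"
      by (cases v) (auto simp: outer_def)
    moreover have "(fst v = 2, snd v) \<in> pts n" using calculation \<open>fst v \<le> 2 \<and> snd v < n\<close> by (simp add: pts_iff)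
    ultimately show False using v0 c by (auto simp: LoopSet_def)
  qed
  ultimately show ?thesis by simp
qed

definition CP where "CP j = {p \<in> pts n. snd p < j \<and> j \<le> snd (P p)}"
definition CQ where "CQ j = {p \<in> pts n. snd p < j \<and> j \<le> snd (Q p)}"
definition A1 where "A1 j = {p \<in> pts n. snd p < j \<and> j \<le> snd (compose n P Q p)}"
definition T where "T j = Inl ` CP j \<union> Inr ` CQ j"
definition kap :: "pt + pt \<Rightarrow> (nat \<times> nat) set" where
  "kap t = (case t of Inl p \<Rightarrow> comp (lowlift p) | Inr p \<Rightarrow> comp (uplift p))"
definition LC where "LC j = {K \<in> LComps. (\<exists>v\<in>K. snd v < j) \<and> (\<exists>v\<in>K. j \<le> snd v)}"

lemma finite_CP: "finite (CP j)" unfolding CP_def using finite_pts by simp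
lemma finite_CQ: "finite (CQ j)" unfolding CQ_def using finite_pts by simp
lemma finite_T: "finite (T j)" unfolding T_def using finite_CP finite_CQ by simp

lemma card_T: "card (T j) = card (CP j) + card (CQ j)"
  unfolding T_def using finite_CP finite_CQ
  by (subst card_Un_disjoint) (auto simp: card_image)

lemma edge_kap:
  assumes e: "(u, w) \<in> E" and "snd u < j" "j \<le> snd w"
  shows "\<exists>t\<in>T j. kap t = comp u"
proof -
  have "(u \<in> V01 \<and> w = NP u) \<or> (u \<in> V12 \<and> w = NQ u)" using e by (simp add: E_iff)
  thus ?thesis
  proof
    assume h: "u \<in> V01 \<and> w = NP u"
    let ?p = "unlow u"
    have "?p \<in> CP j" using h assms unlow_pts[of u] by (simp add: CP_def NP_def)
    moreover have "kap (Inl ?p) = comp u" using h by (simp add: kap_def lowlift_unlow)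
    ultimately show ?thesis unfolding T_def by blast
  next
    assume h: "u \<in> V12 \<and> w = NQ u"
    let ?p = "unup u"
    have "?p \<in> CQ j" using h assms unup_pts[of u] by (simp add: CQ_def NQ_def)
    moreover have "kap (Inr ?p) = comp u" using h by (simp add: kap_def uplift_unup)
    ultimately show ?thesis unfolding T_def by blast
  qed
qed

lemma conn_kap:
  assumes "(x, y) \<in> C" "snd x < j" "j \<le> snd y"
  shows "comp x \<in> kap ` T j"
proof -
  obtain u w where "(x, u) \<in> C" "(u, w) \<in> E" "snd u < j" "j \<le> snd w"
    using cross_edge[OF assms] by blast
  thus ?thesis using edge_kap comp_eq by (metis image_eqI)
qed

definition Ko where "Ko j = (comp \<circ> outer) ` A1 j"

lemma Ko_sub: "Ko j \<subseteq> kap ` T j"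
proof
  fix K assume "K \<in> Ko j"
  then obtain p where p: "p \<in> A1 j" "K = comp (outer p)" unfolding Ko_def by auto
  hence "p \<in> pts n" by (simp add: A1_def)
  hence "(outer p, outer (compose n P Q p)) \<in> C" by (rule compose_props)
  thus "K \<in> kap ` T j" using conn_kap p by (simp add: A1_def)
qed

lemma LC_sub: "LC j \<subseteq> kap ` T j"
proof
  fix K assume K: "K \<in> LC j"
  then obtain v0 a b where v0: "v0 \<in> LoopSet" "K = comp v0" and a: "a \<in> K" "snd a < j"
    and b: "b \<in> K" "j \<le> snd b" unfolding LC_def LComps_def by blast
  have "(a, b) \<in> C" using a b v0 C_sym C_trans by (metis in_comp)
  hence "comp a \<in> kap ` T j" using conn_kap a b by simp
  moreover have "comp a = K" using a v0 comp_eq by (metis in_comp C_sym)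
  ultimately show "K \<in> kap ` T j" by simp
qed

lemma Ko_LC_disj: "Ko j \<inter> LC j = {}"
proof (rule ccontr)
  assume "Ko j \<inter> LC j \<noteq> {}"
  then obtain K where "K \<in> Ko j" "K \<in> LC j" by blast
  then obtain p v0 where "p \<in> A1 j" "K = comp (outer p)" "v0 \<in> LoopSet" "K = comp v0"
    unfolding Ko_def LC_def LComps_def by auto
  hence "(v0, outer p) \<in> C" using comp_self in_comp by metis
  moreover have "p \<in> pts n" using \<open>p \<in> A1 j\<close> by (simp add: A1_def)
  ultimately show False using \<open>v0 \<in> LoopSet\<close> by (simp add: LoopSet_def)
qed

lemma card_Ko: "card (Ko j) = card (A1 j)"
  unfolding Ko_def
proof (rule card_image, rule inj_onI)
  fix p p' assume p: "p \<in> A1 j" and p': "p' \<in> A1 j" and eq: "(comp \<circ> outer) p = (comp \<circ> outer) p'"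
  have pp: "p \<in> pts n" "p' \<in> pts n" using p p' by (auto simp: A1_def)
  have "outer p' \<in> comp (outer p)" using eq comp_self[of "outer p'"] by simp
  hence "(outer p, outer p') \<in> C" by (simp add: in_comp)
  hence "p' = p \<or> p' = endpt p" using endpt_uniq pp by blast
  moreover have "p' \<noteq> endpt p" using p p' compose_eq[OF pp(1)] by (auto simp: A1_def)
  ultimately show "p = p'" by simp
qed

lemma fiber_LC:
  assumes K: "K \<in> LC j"
  shows "2 \<le> card {t \<in> T j. kap t = K}"
proof -
  obtain v0 where v0: "v0 \<in> LoopSet" "K = comp v0" using K unfolding LC_def LComps_def by blast
  have K1: "\<And>v. v \<in> K \<Longrightarrow> fst v = 1 \<and> snd v < n" using LoopSet_comp v0 by blast
  have Kcomp: "\<And>v. v \<in> K \<Longrightarrow> comp v = K" using v0 comp_eq in_comp by metis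
  have KV01: "\<And>v. v \<in> K \<Longrightarrow> v \<in> V01" using K1 by (simp add: V01_iff)
  have KV12: "\<And>v. v \<in> K \<Longrightarrow> v \<in> V12" using K1 by (simp add: V12_iff)
  have KNP: "\<And>v. v \<in> K \<Longrightarrow> NP v \<in> K"
  proof -
    fix v assume v: "v \<in> K"
    hence "(v, NP v) \<in> E" using KV01 by (simp add: E_iff)
    hence "comp (NP v) = comp v" using comp_eq E_C by (metis)
    thus "NP v \<in> K" using Kcomp v comp_self by metis
  qed
  have KNQ: "\<And>v. v \<in> K \<Longrightarrow> NQ v \<in> K"
  proof -
    fix v assume v: "v \<in> K"
    hence "(v, NQ v) \<in> E" using KV12 by (simp add: E_iff)
    hence "comp (NQ v) = comp v" using comp_eq E_C by (metis)
    thus "NQ v \<in> K" using Kcomp v comp_self by metis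
  qed
  have finK: "finite K"
  proof -
    have "K \<subseteq> {..2} \<times> {..<n}" using K1 by force
    thus ?thesis by (rule finite_subset) simp
  qed
  define L where "L = {v \<in> K. snd v < j}"
  define BP where "BP = {v \<in> L. j \<le> snd (NP v)}"
  define BQ where "BQ = {v \<in> L. j \<le> snd (NQ v)}"
  have finL: "finite L" using finK by (simp add: L_def)
  have evP: "even (card {v \<in> L. snd (NP v) < j})"
  proof (rule even_card_inv[where f = NP])
    show "finite {v \<in> L. snd (NP v) < j}" using finL by simp
    fix x assume "x \<in> {v \<in> L. snd (NP v) < j}"
    thus "NP x \<in> {v \<in> L. snd (NP v) < j} \<and> NP x \<noteq> x \<and> NP (NP x) = x"
      using KNP NP_props[OF KV01, of x] by (auto simp: L_def)
  qed
  have evQ: "even (card {v \<in> L. snd (NQ v) < j})"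
  proof (rule even_card_inv[where f = NQ])
    show "finite {v \<in> L. snd (NQ v) < j}" using finL by simp
    fix x assume "x \<in> {v \<in> L. snd (NQ v) < j}"
    thus "NQ x \<in> {v \<in> L. snd (NQ v) < j} \<and> NQ x \<noteq> x \<and> NQ (NQ x) = x"
      using KNQ NQ_props[OF KV12, of x] by (auto simp: L_def)
  qed
  have splP: "card L = card {v \<in> L. snd (NP v) < j} + card BP"
    unfolding BP_def using finL by (subst card_Un_disjoint[symmetric]) (auto intro: arg_cong[where f=card])
  have splQ: "card L = card {v \<in> L. snd (NQ v) < j} + card BQ"
    unfolding BQ_def using finL by (subst card_Un_disjoint[symmetric]) (auto intro: arg_cong[where f=card])
  have e1: "even (card BP) = even (card L)" using splP evP by simp
  have e2: "even (card BQ) = even (card L)" using splQ evQ by simp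
  have ev: "even (card BP + card BQ)" using e1 e2 by simp
  define FP where "FP = {p \<in> CP j. lowlift p \<in> K}"
  define FQ where "FQ = {p \<in> CQ j. uplift p \<in> K}"
  have BP_img: "BP = lowlift ` FP"
  proof
    show "BP \<subseteq> lowlift ` FP"
    proof
      fix v assume v: "v \<in> BP"
      hence vK: "v \<in> K" by (simp add: BP_def L_def)
      have "unlow v \<in> FP" using v KV01[OF vK] unlow_pts[of v]
        by (auto simp: BP_def L_def FP_def CP_def NP_def lowlift_unlow)
      thus "v \<in> lowlift ` FP" using lowlift_unlow[OF KV01[OF vK]] by force
    qed
    show "lowlift ` FP \<subseteq> BP"
    proof
      fix v assume "v \<in> lowlift ` FP"
      then obtain p where p: "p \<in> FP" "v = lowlift p" by blast
      thus "v \<in> BP" by (auto simp: FP_def BP_def L_def CP_def NP_def)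
    qed
  qed
  have BQ_img: "BQ = uplift ` FQ"
  proof
    show "BQ \<subseteq> uplift ` FQ"
    proof
      fix v assume v: "v \<in> BQ"
      hence vK: "v \<in> K" by (simp add: BQ_def L_def)
      have "unup v \<in> FQ" using v KV12[OF vK] unup_pts[of v]
        by (auto simp: BQ_def L_def FQ_def CQ_def NQ_def uplift_unup)
      thus "v \<in> uplift ` FQ" using uplift_unup[OF KV12[OF vK]] by force
    qed
    show "uplift ` FQ \<subseteq> BQ"
    proof
      fix v assume "v \<in> uplift ` FQ"
      then obtain p where p: "p \<in> FQ" "v = uplift p" by blast
      thus "v \<in> BQ" by (auto simp: FQ_def BQ_def L_def CQ_def NQ_def)
    qed
  qed
  have injl: "inj lowlift" by (metis injI unlow_lowlift)
  have inju: "inj uplift" by (metis injI unup_uplift)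
  have cBP: "card BP = card FP" unfolding BP_img by (rule card_image) (rule inj_on_subset[OF injl], simp)
  have cBQ: "card BQ = card FQ" unfolding BQ_img by (rule card_image) (rule inj_on_subset[OF inju], simp)
  have sub: "Inl ` FP \<union> Inr ` FQ \<subseteq> {t \<in> T j. kap t = K}"
  proof
    fix t assume "t \<in> Inl ` FP \<union> Inr ` FQ"
    then consider p where "p \<in> FP" "t = Inl p" | p where "p \<in> FQ" "t = Inr p" by blast
    thus "t \<in> {t \<in> T j. kap t = K}"
    proof cases
      case 1
      hence "kap t = K" using Kcomp[of "lowlift p"] by (simp add: FP_def kap_def)
      thus ?thesis using 1 by (auto simp: FP_def T_def)
    next
      case 2
      hence "kap t = K" using Kcomp[of "uplift p"] by (simp add: FQ_def kap_def)
      thus ?thesis using 2 by (auto simp: FQ_def T_def)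
    qed
  qed
  have finF: "finite {t \<in> T j. kap t = K}" using finite_T by simp
  have finFP: "finite FP" "finite FQ" using finite_CP finite_CQ by (auto simp: FP_def FQ_def)
  have cU: "card (Inl ` FP \<union> Inr ` FQ) = card FP + card FQ"
    using finFP by (subst card_Un_disjoint) (auto simp: card_image)
  have ne: "card FP + card FQ \<noteq> 0"
  proof -
    have "K \<in> kap ` T j" using LC_sub K by blast
    then obtain t where t: "t \<in> T j" "kap t = K" by blast
    have "t \<in> Inl ` FP \<union> Inr ` FQ"
    proof -
      from t(1) consider p where "p \<in> CP j" "t = Inl p" | p where "p \<in> CQ j" "t = Inr p"
        unfolding T_def by blast
      thus ?thesis
      proof cases
        case 1
        hence "lowlift p \<in> K" using t(2) comp_self[of "lowlift p"] by (simp add: kap_def)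
        thus ?thesis using 1 by (auto simp: FP_def)
      next
        case 2
        hence "uplift p \<in> K" using t(2) comp_self[of "uplift p"] by (simp add: kap_def)
        thus ?thesis using 2 by (auto simp: FQ_def)
      qed
    qed
    hence "Inl ` FP \<union> Inr ` FQ \<noteq> {}" by blast
    thus ?thesis using finFP by auto
  qed
  have "2 \<le> card FP + card FQ" using ev ne cBP cBQ by presburger
  also have "\<dots> \<le> card {t \<in> T j. kap t = K}" using card_mono[OF finF sub] cU by simp
  finally show ?thesis .
qed

lemma line_ineq: "cr n j (compose n P Q) + 2 * card (LC j) \<le> cr n j P + cr n j Q"
proof -
  have finKT: "finite (kap ` T j)" using finite_T by simp
  let ?f = "\<lambda>K. card {t \<in> T j. kap t = K}"
  have "card (T j) = (\<Sum>t\<in>T j. 1)" by simp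
  also have "\<dots> = (\<Sum>K\<in>kap ` T j. \<Sum>t\<in>{t \<in> T j. kap t = K}. 1)"
    by (rule sum.image_gen[OF finite_T])
  also have "\<dots> = (\<Sum>K\<in>kap ` T j. ?f K)" by simp
  finally have cT: "card (T j) = (\<Sum>K\<in>kap ` T j. ?f K)" .
  have "(\<Sum>K\<in>Ko j \<union> LC j. ?f K) \<le> (\<Sum>K\<in>kap ` T j. ?f K)"
    using Ko_sub LC_sub finKT by (intro sum_mono2) auto
  moreover have "(\<Sum>K\<in>Ko j \<union> LC j. ?f K) = (\<Sum>K\<in>Ko j. ?f K) + (\<Sum>K\<in>LC j. ?f K)"
    using Ko_LC_disj finite_subset[OF Ko_sub finKT] finite_subset[OF LC_sub finKT] by (intro sum.union_disjoint) auto
  moreover have "(\<Sum>K\<in>Ko j. ?f K) \<ge> (\<Sum>K\<in>Ko j. 1)"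
  proof (rule sum_mono)
    fix K assume "K \<in> Ko j"
    hence "K \<in> kap ` T j" using Ko_sub by blast
    then obtain t where "t \<in> T j" "kap t = K" by blast
    hence "{t \<in> T j. kap t = K} \<noteq> {}" by blast
    thus "1 \<le> ?f K" using finite_T by (simp add: Suc_le_eq card_gt_0_iff)
  qed
  moreover have "(\<Sum>K\<in>LC j. ?f K) \<ge> (\<Sum>K\<in>LC j. 2)"
    by (rule sum_mono) (rule fiber_LC)
  ultimately have "card (Ko j) + 2 * card (LC j) \<le> card (T j)"
    using cT by simp
  moreover have "card (A1 j) = cr n j (compose n P Q)" by (simp add: A1_def cr_def)
  moreover have "card (CP j) = cr n j P" "card (CQ j) = cr n j Q" by (simp_all add: CP_def CQ_def cr_def)
  ultimately show ?thesis using card_Ko card_T by simp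
qed

lemma finite_LoopSet: "finite LoopSet"
proof -
  have "LoopSet \<subseteq> {..2} \<times> {..<n}" by (auto simp: LoopSet_def)
  thus ?thesis by (rule finite_subset) simp
qed

lemma LComps_cross: assumes K: "K \<in> LComps" shows "\<exists>j\<le>n. K \<in> LC j"
proof -
  obtain v0 where v0: "v0 \<in> LoopSet" "K = comp v0" using K unfolding LComps_def by blast
  have a: "v0 \<in> K" using v0 comp_self by simp
  have v0V: "v0 \<in> V01" using v0 by (simp add: LoopSet_def V01_iff)
  have "(v0, NP v0) \<in> E" using v0V by (simp add: E_iff)
  hence b: "NP v0 \<in> K" using v0 by (simp add: in_comp E_C)
  have l1: "fst v0 = 1" "fst (NP v0) = 1" "snd v0 < n" "snd (NP v0) < n"
    using LoopSet_comp[OF v0(1)] a b v0 by auto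
  have "NP v0 \<noteq> v0" using NP_props[OF v0V] by simp
  hence ne: "snd (NP v0) \<noteq> snd v0" using l1 by (cases v0; cases "NP v0") auto
  define j where "j = max (snd v0) (snd (NP v0))"
  have "j \<le> n" using l1 by (simp add: j_def)
  moreover have "K \<in> LC j"
  proof (cases "snd v0 < snd (NP v0)")
    case True
    hence "snd v0 < j" "j \<le> snd (NP v0)" by (auto simp: j_def)
    thus ?thesis unfolding LC_def using K a b by blast
  next
    case False
    hence "snd (NP v0) < j" "j \<le> snd v0" using ne by (auto simp: j_def)
    thus ?thesis unfolding LC_def using K a b by blast
  qed
  ultimately show ?thesis by blast
qed

theorem subadd: "Phi n (compose n P Q) + 2 * loops n P Q \<le> Phi n P + Phi n Q"
proof -
  have finLC: "finite LComps" using finite_LoopSet by (simp add: LComps_def)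
  have LCsub: "LC j \<subseteq> LComps" for j by (auto simp: LC_def)
  have cLC: "card (LC j) = (\<Sum>K\<in>LComps. if K \<in> LC j then 1 else 0)" for j
  proof -
    have "card (LC j) = card (LComps \<inter> LC j)" using LCsub[of j] by (simp add: Int_absorb1)
    also have "\<dots> = (\<Sum>K\<in>LComps. if K \<in> LC j then 1 else 0)"
      using sum.inter_restrict[OF finLC, of "\<lambda>_. (1::nat)" "LC j"] by simp
    finally show ?thesis .
  qed
  have "card LComps = (\<Sum>K\<in>LComps. 1)" by simp
  also have "\<dots> \<le> (\<Sum>K\<in>LComps. \<Sum>j\<le>n. if K \<in> LC j then 1 else 0)"
  proof (rule sum_mono)
    fix K assume "K \<in> LComps"
    then obtain j where j: "j \<le> n" "K \<in> LC j" using LComps_cross by blast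
    have "(if K \<in> LC j then 1 else 0) \<le> (\<Sum>j\<le>n. if K \<in> LC j then 1 else (0::nat))"
      using j by (intro member_le_sum) auto
    thus "1 \<le> (\<Sum>j\<le>n. if K \<in> LC j then 1 else (0::nat))" using j by simp
  qed
  also have "\<dots> = (\<Sum>j\<le>n. \<Sum>K\<in>LComps. if K \<in> LC j then 1 else 0)" by (rule sum.swap)
  also have "\<dots> = (\<Sum>j\<le>n. card (LC j))" using cLC by simp
  finally have cL: "card LComps \<le> (\<Sum>j\<le>n. card (LC j))" .
  have "(\<Sum>j\<le>n. cr n j (compose n P Q) + 2 * card (LC j)) \<le> (\<Sum>j\<le>n. cr n j P + cr n j Q)"
    by (rule sum_mono) (rule line_ineq)
  hence "Phi n (compose n P Q) + 2 * (\<Sum>j\<le>n. card (LC j)) \<le> Phi n P + Phi n Q"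
    by (simp add: Phi_def sum.distrib sum_distrib_left)
  thus ?thesis using cL loops_eq by simp
qed

end


definition GoodS :: "nat \<Rightarrow> int \<Rightarrow> tl \<Rightarrow> bool" where
  "GoodS n s a \<longleftrightarrow> (\<forall>M\<in>CM n. good (int (Phi n M) - s) (a M))"

lemma finite_CM: "finite (CM n)"
proof -
  define F where "F = (\<lambda>M::diagram. \<lambda>p. if p \<in> pts n then M p else undefined)"
  have inj: "inj_on F (CM n)"
  proof (rule inj_onI)
    fix M M' assume M: "M \<in> CM n" and M': "M' \<in> CM n" and eq: "F M = F M'"
    show "M = M'"
    proof
      fix p show "M p = M' p"
      proof (cases "p \<in> pts n")
        case True thus ?thesis using fun_cong[OF eq, of p] by (simp add: F_def)
      next
        case False thus ?thesis using CM_out[OF M False] CM_out[OF M' False] by simp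
      qed
    qed
  qed
  have "F ` CM n \<subseteq> {f. \<forall>x. (x \<in> pts n \<longrightarrow> f x \<in> pts n) \<and> (x \<notin> pts n \<longrightarrow> f x = undefined)}"
    using CM_D by (auto simp: F_def)
  moreover have "finite {f. \<forall>x. (x \<in> pts n \<longrightarrow> f x \<in> pts n) \<and> (x \<notin> pts n \<longrightarrow> f x = (undefined :: pt))}"
    using finite_pts by (intro finite_set_of_finite_funs)
  ultimately have "finite (F ` CM n)" by (rule finite_subset)
  thus ?thesis using inj by (rule finite_imageD)
qed

lemma GoodS_mult:
  assumes a: "GoodS n s a" and b: "GoodS n t b"
  shows "GoodS n (s + t) (tl_mult n a b)"
  unfolding GoodS_def
proof
  fix M assume M: "M \<in> CM n"
  show "good (int (Phi n M) - (s + t)) (tl_mult n a b M)"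
    unfolding tl_mult_def
  proof (intro good_sum finite_CM)
    fix P Q assume P: "P \<in> CM n" and Q: "Q \<in> CM n"
    show "good (int (Phi n M) - (s + t)) (if compose n P Q = M then a P * b Q * loop_val ^ loops n P Q else 0)"
    proof (cases "compose n P Q = M")
      case True
      have g: "good ((int (Phi n P) - s) + (int (Phi n Q) - t) + (- 2 * int (loops n P Q)))
                 (a P * b Q * loop_val ^ loops n P Q)"
        using a b P Q good_loop_pow by (intro good_mult) (auto simp: GoodS_def)
      have "Phi n (compose n P Q) + 2 * loops n P Q \<le> Phi n P + Phi n Q"
        using two.subadd[of n P Q] P Q by (simp add: two_def)
      hence "Phi n M + 2 * loops n P Q \<le> Phi n P + Phi n Q" using True by simp
      hence "int (Phi n M + 2 * loops n P Q) \<le> int (Phi n P + Phi n Q)" by (simp only: of_nat_le_iff)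
      hence "int (Phi n M) - (s + t) \<le> (int (Phi n P) - s) + (int (Phi n Q) - t) + (- 2 * int (loops n P Q))"
        by simp
      thus ?thesis using g True by (simp add: good_mono)
    qed simp
  qed
qed

lemma cr_hook: assumes "1 \<le> i" "i < n"
  shows "{p \<in> pts n. snd p < j \<and> j \<le> snd (hook n i p)} \<subseteq> (if j = i then {(False, i - 1), (True, i - 1)} else {})"
  using assms by (auto simp: hook_def pts_def split: if_splits)

lemma Phi_hook: assumes "1 \<le> i" "i < n" shows "Phi n (hook n i) \<le> 2"
proof -
  have "cr n j (hook n i) \<le> (if j = i then 2 else 0)" for j
  proof -
    have "cr n j (hook n i) \<le> card (if j = i then {(False, i - 1), (True, i - 1)} else {})"
      unfolding cr_def by (rule card_mono) (use cr_hook[OF assms] in auto)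
    thus ?thesis by (simp split: if_splits)
  qed
  hence "Phi n (hook n i) \<le> (\<Sum>j\<le>n. if j = i then 2 else 0)"
    unfolding Phi_def by (intro sum_mono) auto
  also have "\<dots> = 2" using assms by simp
  finally show ?thesis .
qed

lemma GoodS_hook: assumes "1 \<le> i" "i < n" shows "GoodS n 2 (basis n (hook n i))"
  unfolding GoodS_def basis_def
proof
  fix M assume "M \<in> CM n"
  show "good (int (Phi n M) - 2) (if M = hook n i then 1 else 0)"
    using Phi_hook[OF assms] good_one by (auto intro: good_mono)
qed

lemma Phi_id: "Phi n (id_diag n) = 0"
proof -
  have sid: "snd (id_diag n p) = snd p" for p by (cases p) (simp add: id_diag_def)
  have "cr n j (id_diag n) = 0" for j
  proof -
    have e: "{p \<in> pts n. snd p < j \<and> j \<le> snd (id_diag n p)} = {}" using sid by auto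
    show ?thesis unfolding cr_def e by simp
  qed
  thus ?thesis by (simp add: Phi_def)
qed

lemma GoodS_id: "GoodS n 0 (basis n (id_diag n))"
  unfolding GoodS_def basis_def using Phi_id good_one by auto

definition restr :: "nat \<Rightarrow> diagram \<Rightarrow> diagram" where
  "restr n M = (\<lambda>p. if p \<in> pts n then M p else p)"

lemma bpos_Suc: "p \<in> pts n \<Longrightarrow> q \<in> pts n \<Longrightarrow> bpos n p < bpos n q \<longleftrightarrow> bpos (Suc n) p < bpos (Suc n) q"
  by (cases p; cases q) (auto simp: bpos_def pts_def)

lemma restr_CM:
  assumes M: "M \<in> CM (Suc n)" and e: "M (False, n) = (True, n)"
  shows "restr n M \<in> CM n"
proof -
  have e2: "M (True, n) = (False, n)" using CM_D[OF M, of "(False, n)"] e by (simp add: pts_def)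
  have inp: "M p \<in> pts n" if p: "p \<in> pts n" for p
  proof -
    have pS: "p \<in> pts (Suc n)" using p by (simp add: pts_def)
    have "M p \<in> pts (Suc n)" "M (M p) = p" using CM_D[OF M pS] by auto
    moreover have "snd (M p) \<noteq> n"
    proof
      assume "snd (M p) = n"
      hence "M p = (False, n) \<or> M p = (True, n)" by (cases "M p") auto
      hence "p = (True, n) \<or> p = (False, n)" using e e2 \<open>M (M p) = p\<close> by auto
      thus False using p by (auto simp: pts_def)
    qed
    ultimately show ?thesis by (simp add: pts_def)
  qed
  show ?thesis unfolding CM_def
  proof (intro CollectI conjI ballI allI impI)
    fix p assume p: "p \<in> pts n"
    have pS: "p \<in> pts (Suc n)" using p by (simp add: pts_def)
    show "restr n M p \<in> pts n" using inp p by (simp add: restr_def)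
    show "restr n M p \<noteq> p" using CM_D[OF M pS] p by (simp add: restr_def)
    show "restr n M (restr n M p) = p" using CM_D[OF M pS] p inp[OF p] by (simp add: restr_def)
  next
    fix p assume "p \<notin> pts n" thus "restr n M p = p" by (simp add: restr_def)
  next
    show "\<not> (\<exists>p\<in>pts n. \<exists>q\<in>pts n. bpos n p < bpos n q \<and> bpos n q < bpos n (restr n M p) \<and> bpos n (restr n M p) < bpos n (restr n M q))"
    proof
      assume "\<exists>p\<in>pts n. \<exists>q\<in>pts n. bpos n p < bpos n q \<and> bpos n q < bpos n (restr n M p) \<and> bpos n (restr n M p) < bpos n (restr n M q)"
      then obtain p q where pq: "p \<in> pts n" "q \<in> pts n" "bpos n p < bpos n q" "bpos n q < bpos n (M p)" "bpos n (M p) < bpos n (M q)"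
        by (auto simp: restr_def)
      have "bpos (Suc n) p < bpos (Suc n) q" "bpos (Suc n) q < bpos (Suc n) (M p)" "bpos (Suc n) (M p) < bpos (Suc n) (M q)"
        using pq inp bpos_Suc by blast+
      moreover have "p \<in> pts (Suc n)" "q \<in> pts (Suc n)" using pq by (auto simp: pts_def)
      ultimately show False using M unfolding CM_def by blast
    qed
  qed
qed

lemma Phi_restr:
  assumes M: "M \<in> CM (Suc n)" and e: "M (False, n) = (True, n)"
  shows "Phi (Suc n) M = Phi n (restr n M)"
proof -
  have a: "cr (Suc n) j M = cr n j (restr n M)" if j: "j \<le> n" for j
  proof -
    have "{p \<in> pts (Suc n). snd p < j \<and> j \<le> snd (M p)} = {p \<in> pts n. snd p < j \<and> j \<le> snd (restr n M p)}"
      using j by (auto simp: pts_def restr_def)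
    thus ?thesis by (simp add: cr_def)
  qed
  have b: "cr (Suc n) (Suc n) M = 0"
  proof -
    have e: "{p \<in> pts (Suc n). snd p < Suc n \<and> Suc n \<le> snd (M p)} = {}"
    proof -
      have "snd (M p) < Suc n" if "p \<in> pts (Suc n)" for p using CM_D[OF M that] by (simp add: pts_def)
      thus ?thesis by fastforce
    qed
    show ?thesis unfolding cr_def e by simp
  qed
  show ?thesis unfolding Phi_def using a b by simp
qed

lemma GoodS_tensor: assumes "GoodS n 0 a" shows "GoodS (Suc n) 0 (tensor1 n a)"
  unfolding GoodS_def
proof
  fix M assume M: "M \<in> CM (Suc n)"
  show "good (int (Phi (Suc n) M) - 0) (tensor1 n a M)"
  proof (cases "M (False, n) = (True, n)")
    case True
    have "tensor1 n a M = a (restr n M)" using True by (simp add: tensor1_def restr_def)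
    moreover have "good (int (Phi n (restr n M)) - 0) (a (restr n M))"
      using assms restr_CM[OF M True] by (simp add: GoodS_def)
    ultimately show ?thesis using Phi_restr[OF M True] by simp
  qed (simp add: tensor1_def)
qed

lemma GoodS_scale: "GoodS n s a \<Longrightarrow> good k c \<Longrightarrow> GoodS n (s - k) (\<lambda>M. c * a M)"
  unfolding GoodS_def by (auto dest: good_mult[of k c] simp: algebra_simps)

lemma GoodS_diff: "GoodS n s a \<Longrightarrow> GoodS n s b \<Longrightarrow> GoodS n s (\<lambda>M. a M - b M)"
  unfolding GoodS_def by (auto intro: good_diff)

lemma GoodS_jw: "GoodS (Suc m) 0 (jw (Suc m))"
proof (induction m)
  case 0 thus ?case using GoodS_id by simp
next
  case (Suc m)
  define g where "g = tensor1 (Suc m) (jw (Suc m))"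
  define r where "r = Delta m / Delta (Suc m)"
  define t where "t = tl_mult (Suc (Suc m)) (tl_mult (Suc (Suc m)) g (basis (Suc (Suc m)) (hook (Suc (Suc m)) (Suc m)))) g"
  have gG: "GoodS (Suc (Suc m)) 0 g" using GoodS_tensor[OF Suc.IH] by (simp add: g_def)
  have hG: "GoodS (Suc (Suc m)) 2 (basis (Suc (Suc m)) (hook (Suc (Suc m)) (Suc m)))"
    by (rule GoodS_hook) auto
  have tG: "GoodS (Suc (Suc m)) 2 t" unfolding t_def
    using GoodS_mult[OF GoodS_mult[OF gG hG] gG] by simp
  have rtG: "GoodS (Suc (Suc m)) 0 (\<lambda>M. r * t M)"
    using GoodS_scale[OF tG good_ratio[of m]] by (simp add: r_def)
  have "jw (Suc (Suc m)) = (\<lambda>M. g M - r * t M)"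
    by (simp add: g_def r_def t_def Let_def)
  thus ?case using GoodS_diff[OF gG rtG] by simp
qed


definition NC :: "nat \<Rightarrow> (pt \<Rightarrow> nat) \<Rightarrow> diagram \<Rightarrow> bool" where
  "NC n f D \<longleftrightarrow> (\<forall>p\<in>pts n. \<forall>q\<in>pts n. \<not> (f p < f q \<and> f q < f (D p) \<and> f (D p) < f (D q)))"

lemma CM_iff: "D \<in> CM n \<longleftrightarrow> (\<forall>p\<in>pts n. D p \<in> pts n \<and> D p \<noteq> p \<and> D (D p) = p) \<and> (\<forall>p. p \<notin> pts n \<longrightarrow> D p = p) \<and> NC n (bpos n) D"
  unfolding CM_def NC_def by blast

lemma rot4:
  fixes \<alpha> \<beta> \<gamma> \<delta> c N :: nat
  assumes "\<alpha> < N" "\<beta> < N" "\<gamma> < N" "\<delta> < N" "c \<le> N"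
    "(\<alpha> + c) mod N < (\<beta> + c) mod N" "(\<beta> + c) mod N < (\<gamma> + c) mod N" "(\<gamma> + c) mod N < (\<delta> + c) mod N"
  shows "(\<alpha> < \<beta> \<and> \<beta> < \<gamma> \<and> \<gamma> < \<delta>) \<or> (\<beta> < \<gamma> \<and> \<gamma> < \<delta> \<and> \<delta> < \<alpha>) \<or> (\<gamma> < \<delta> \<and> \<delta> < \<alpha> \<and> \<alpha> < \<beta>) \<or> (\<delta> < \<alpha> \<and> \<alpha> < \<beta> \<and> \<beta> < \<gamma>)"
proof -
  have m: "(x + c) mod N = (if x + c < N then x + c else x + c - N)" if "x < N" for x
  proof (cases "x + c < N")
    case False
    hence "x + c - N < N" using that assms(5) by linarith
    hence "(x + c - N) mod N = x + c - N" by simp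
    moreover have "(x + c) mod N = (x + c - N) mod N" using False by (simp add: le_mod_geq)
    ultimately show ?thesis using False by simp
  qed simp
  show ?thesis using assms(6-8) m[OF assms(1)] m[OF assms(2)] m[OF assms(3)] m[OF assms(4)] assms(1-5)
    by (simp split: if_splits; linarith)
qed

lemma NC_rot:
  assumes inv: "\<And>p. p \<in> pts n \<Longrightarrow> D p \<in> pts n \<and> D (D p) = p"
    and fN: "\<And>p. p \<in> pts n \<Longrightarrow> f p < N" and c: "c \<le> N" and nc: "NC n f D"
  shows "NC n (\<lambda>p. (f p + c) mod N) D"
  unfolding NC_def
proof (intro ballI notI)
  fix p q assume p: "p \<in> pts n" and q: "q \<in> pts n"
    and h: "(f p + c) mod N < (f q + c) mod N \<and> (f q + c) mod N < (f (D p) + c) mod N \<and> (f (D p) + c) mod N < (f (D q) + c) mod N"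
  have Dp: "D p \<in> pts n" "D (D p) = p" using inv p by auto
  have Dq: "D q \<in> pts n" "D (D q) = q" using inv q by auto
  have "(f p < f q \<and> f q < f (D p) \<and> f (D p) < f (D q)) \<or> (f q < f (D p) \<and> f (D p) < f (D q) \<and> f (D q) < f p) \<or>
        (f (D p) < f (D q) \<and> f (D q) < f p \<and> f p < f q) \<or> (f (D q) < f p \<and> f p < f q \<and> f q < f (D p))"
    using h fN[OF p] fN[OF q] fN[OF Dp(1)] fN[OF Dq(1)] c by (intro rot4) auto
  thus False
  proof (elim disjE)
    assume "f p < f q \<and> f q < f (D p) \<and> f (D p) < f (D q)"
    thus False using nc p q unfolding NC_def by blast
  next
    assume "f q < f (D p) \<and> f (D p) < f (D q) \<and> f (D q) < f p"
    thus False using nc q Dp unfolding NC_def by metis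
  next
    assume "f (D p) < f (D q) \<and> f (D q) < f p \<and> f p < f q"
    thus False using nc Dp Dq unfolding NC_def by metis
  next
    assume "f (D q) < f p \<and> f p < f q \<and> f q < f (D p)"
    thus False using nc Dq p unfolding NC_def by metis
  qed
qed

definition Xc :: "nat \<Rightarrow> nat \<Rightarrow> nat \<Rightarrow> nat \<Rightarrow> bool" where
  "Xc u v w z \<longleftrightarrow> ((min u v < w \<and> w < max u v) \<noteq> (min u v < z \<and> z < max u v))"

lemma NC_Xc:
  assumes inv: "\<And>p. p \<in> pts n \<Longrightarrow> D p \<in> pts n \<and> D (D p) = p"
    and inj: "inj_on f (pts n)" and nc: "NC n f D"
    and p: "p \<in> pts n" and q: "q \<in> pts n" and qp: "q \<noteq> p" "q \<noteq> D p"
  shows "\<not> Xc (f p) (f (D p)) (f q) (f (D q))"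
proof
  assume X: "Xc (f p) (f (D p)) (f q) (f (D q))"
  have Dp: "D p \<in> pts n" "D (D p) = p" using inv p by auto
  have Dq: "D q \<in> pts n" "D (D q) = q" using inv q by auto
  have d1: "f q \<noteq> f p" "f q \<noteq> f (D p)" using qp inj p q Dp by (auto dest: inj_onD)
  have "D q \<noteq> p" "D q \<noteq> D p" using qp Dp Dq by metis+
  hence d2: "f (D q) \<noteq> f p" "f (D q) \<noteq> f (D p)" using inj p Dq Dp by (auto dest: inj_onD)
  have n1: "\<not> (f p' < f q' \<and> f q' < f (D p') \<and> f (D p') < f (D q'))" if "p' \<in> pts n" "q' \<in> pts n" for p' q'
    using nc that unfolding NC_def by blast
  note a = n1[OF p q] n1[OF p Dq(1)] n1[OF Dp(1) q] n1[OF Dp(1) Dq(1)]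
           n1[OF q p] n1[OF q Dp(1)] n1[OF Dq(1) p] n1[OF Dq(1) Dp(1)]
  show False using X d1 d2 a Dp(2) Dq(2) unfolding Xc_def min_def max_def
    by (auto split: if_splits)
qed

lemma Xc_NC:
  assumes h: "\<And>p q. p \<in> pts n \<Longrightarrow> q \<in> pts n \<Longrightarrow> q \<noteq> p \<Longrightarrow> q \<noteq> D p \<Longrightarrow> \<not> Xc (f p) (f (D p)) (f q) (f (D q))"
  shows "NC n f D"
  unfolding NC_def
proof (intro ballI notI)
  fix p q assume p: "p \<in> pts n" and q: "q \<in> pts n" and o: "f p < f q \<and> f q < f (D p) \<and> f (D p) < f (D q)"
  hence "q \<noteq> p" "q \<noteq> D p" by auto
  hence "\<not> Xc (f p) (f (D p)) (f q) (f (D q))" using h p q by blast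
  thus False using o unfolding Xc_def by auto
qed


lemma smono_shift:
  fixes \<sigma> :: "nat \<Rightarrow> nat" and n :: nat
  assumes sm: "\<And>i k. i < k \<Longrightarrow> k < n \<Longrightarrow> \<sigma> i < (\<sigma> k :: nat)"
  shows "i + k < n \<Longrightarrow> \<sigma> i + k \<le> \<sigma> (i + k)"
proof (induction k)
  case (Suc k)
  hence "\<sigma> i + k \<le> \<sigma> (i + k)" by simp
  moreover have "\<sigma> (i + k) < \<sigma> (i + Suc k)" using sm Suc.prems by simp
  ultimately show ?case by simp
qed simp

lemma smono_id:
  fixes \<sigma> :: "nat \<Rightarrow> nat" and n :: nat
  assumes sm: "\<And>i k. i < k \<Longrightarrow> k < n \<Longrightarrow> \<sigma> i < (\<sigma> k :: nat)" and bd: "\<And>i. i < n \<Longrightarrow> \<sigma> i < n"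
    and i: "i < n"
  shows "\<sigma> i = i"
proof -
  have a0: "0 + i < n" using i by simp
  have a: "\<sigma> 0 + i \<le> \<sigma> (0 + i)" by (rule smono_shift[OF sm a0])
  have e: "i + (n - 1 - i) = n - 1" using i by simp
  have b0: "i + (n - 1 - i) < n" using i by simp
  have b: "\<sigma> i + (n - 1 - i) \<le> \<sigma> (i + (n - 1 - i))" by (rule smono_shift[OF sm b0])
  have c: "\<sigma> (n - 1) < n" using i by (intro bd) arith
  show ?thesis using a b c e by simp
qed

lemma bpos_bot[simp]: "bpos n (False, i) = i" by (simp add: bpos_def)
lemma bpos_top[simp]: "bpos n (True, i) = 2 * n - 1 - i" by (simp add: bpos_def)

lemma all_through:
  assumes M: "M \<in> CM n" and th: "\<And>i. i < n \<Longrightarrow> fst (M (False, i))"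
  shows "M = id_diag n"
proof -
  define B where "B = (\<lambda>i. (False, i)) ` {..<n}"
  define T where "T = (\<lambda>i. (True, i)) ` {..<n}"
  have Bp: "B \<subseteq> pts n" "T \<subseteq> pts n" by (auto simp: B_def T_def pts_def)
  have MB: "M ` B \<subseteq> T"
  proof
    fix t assume "t \<in> M ` B"
    then obtain i where i: "i < n" "t = M (False, i)" by (auto simp: B_def)
    have "M (False, i) \<in> pts n" using CM_D[OF M, of "(False, i)"] i by (simp add: pts_def)
    moreover have "M (False, i) = (True, snd (M (False, i)))" using th[OF i(1)] by (cases "M (False, i)") auto
    ultimately show "t \<in> T" using i unfolding T_def pts_def by (metis (mono_tags, lifting) image_eqI lessThan_iff mem_Collect_eq)
  qed
  have injB: "inj_on M B"
  proof (rule inj_onI)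
    fix u v assume "u \<in> B" "v \<in> B" "M u = M v"
    moreover have "u \<in> pts n" "v \<in> pts n" using calculation Bp by auto
    ultimately show "u = v" using CM_D[OF M, of u] CM_D[OF M, of v] by metis
  qed
  have cB: "card (M ` B) = card T"
    using card_image[OF injB] by (simp add: B_def T_def card_image inj_on_def)
  have MBT: "M ` B = T" using card_subset_eq[OF _ MB cB] by (simp add: T_def)
  define \<sigma> where "\<sigma> i = snd (M (False, i))" for i
  have Mb: "M (False, i) = (True, \<sigma> i)" "\<sigma> i < n" if "i < n" for i
  proof -
    have "M (False, i) \<in> T" using MB that by (auto simp: B_def)
    thus "M (False, i) = (True, \<sigma> i)" "\<sigma> i < n" by (auto simp: T_def \<sigma>_def)
  qed
  have sm: "\<sigma> i < \<sigma> k" if ik: "i < k" "k < n" for i k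
  proof (rule ccontr)
    assume "\<not> \<sigma> i < \<sigma> k"
    moreover have "\<sigma> i \<noteq> \<sigma> k"
    proof
      assume "\<sigma> i = \<sigma> k"
      hence "M (False, i) = M (False, k)" using Mb ik by simp
      hence "M (M (False, i)) = M (M (False, k))" by simp
      thus False using CM_D[OF M, of "(False, i)"] CM_D[OF M, of "(False, k)"] ik by (simp add: pts_def)
    qed
    ultimately have lt: "\<sigma> k < \<sigma> i" by simp
    have "bpos n (False, i) < bpos n (False, k)" "bpos n (False, k) < bpos n (M (False, i))"
      "bpos n (M (False, i)) < bpos n (M (False, k))"
      using ik Mb[of i] Mb[of k] lt by auto
    moreover have "(False, i) \<in> pts n" "(False, k) \<in> pts n" using ik by (auto simp: pts_def)
    ultimately show False using M unfolding CM_def by blast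
  qed
  have sid: "\<sigma> i = i" if "i < n" for i using smono_id[of n \<sigma>, OF sm] Mb that by blast
  show ?thesis
  proof
    fix p show "M p = id_diag n p"
    proof (cases "p \<in> pts n")
      case False thus ?thesis using CM_out[OF M False] by (cases p) (auto simp: id_diag_def pts_def)
    next
      case True
      obtain b i where p: "p = (b, i)" by (cases p)
      have i: "i < n" using True p by (simp add: pts_def)
      show ?thesis
      proof (cases b)
        case False thus ?thesis using Mb[OF i] sid[OF i] p i by (simp add: id_diag_def)
      next
        case b: True
        have "p \<in> M ` B" using MBT p b i by (auto simp: T_def)
        then obtain j where j: "j < n" "p = M (False, j)" by (auto simp: B_def)
        hence "j = i" using Mb[OF j(1)] sid[OF j(1)] p by simp
        moreover have "M p = (False, j)" using j CM_D[OF M, of "(False, j)"] by (simp add: pts_def)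
        ultimately show ?thesis using p b i by (simp add: id_diag_def)
      qed
    qed
  qed
qed

lemma adj_cup:
  assumes M: "M \<in> CM n" and ne: "M \<noteq> id_diag n"
  shows "\<exists>a. a + 1 < n \<and> M (False, a) = (False, a + 1)"
proof -
  obtain i0 where i0: "i0 < n" "\<not> fst (M (False, i0))" using all_through[OF M] ne by blast
  define G where "G = {(i, k). i < k \<and> k < n \<and> M (False, i) = (False, k)}"
  have inv: "M (M (False, i)) = (False, i)" "M (False, i) \<in> pts n" "M (False, i) \<noteq> (False, i)" if "i < n" for i
    using CM_D[OF M, of "(False, i)"] that by (auto simp: pts_def)
  have "G \<noteq> {}"
  proof -
    obtain k where k: "M (False, i0) = (False, k)" using i0 by (cases "M (False, i0)") auto
    have kn: "k < n" "k \<noteq> i0" using inv[OF i0(1)] k by (auto simp: pts_def)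
    show ?thesis
    proof (cases "i0 < k")
      case True thus ?thesis using k kn by (auto simp: G_def)
    next
      case False
      hence "k < i0" using kn by simp
      moreover have "M (False, k) = (False, i0)" using inv[OF i0(1)] k by simp
      ultimately show ?thesis using i0 by (auto simp: G_def)
    qed
  qed
  then obtain g0 where "g0 \<in> G" by blast
  define d where "d = (LEAST d. \<exists>i k. (i, k) \<in> G \<and> d = k - i)"
  obtain i1 k1 where g1: "(i1, k1) \<in> G" using \<open>g0 \<in> G\<close> by (cases g0) auto
  have ex1: "\<exists>i k. (i, k) \<in> G \<and> k1 - i1 = k - i" using g1 by blast
  have "\<exists>i k. (i, k) \<in> G \<and> d = k - i"
    unfolding d_def by (rule LeastI[of _ "k1 - i1"]) (rule ex1)
  then obtain i k where ik: "(i, k) \<in> G" "d = k - i" by blast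
  have dmin: "d \<le> k' - i'" if "(i', k') \<in> G" for i' k'
    unfolding d_def by (rule Least_le) (use that in blast)
  have ik': "i < k" "k < n" "M (False, i) = (False, k)" using ik by (auto simp: G_def)
  have Mk: "M (False, k) = (False, i)" using inv[of i] ik' by simp
  show ?thesis
  proof (cases "k = i + 1")
    case True thus ?thesis using ik' by auto
  next
    case False
    hence k2: "i + 1 < k" using ik' by simp
    have i1n: "i + 1 < n" using k2 ik' by simp
    have cross: False if "bpos n p < bpos n q" "bpos n q < bpos n (M p)" "bpos n (M p) < bpos n (M q)" "p \<in> pts n" "q \<in> pts n" for p q
      using M that unfolding CM_def by blast
    obtain bl l where r: "M (False, i + 1) = (bl, l)" by (cases "M (False, i + 1)")
    have ln: "l < n" using inv[OF i1n] r by (simp add: pts_def)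
    have pi: "(False, i) \<in> pts n" "(False, i + 1) \<in> pts n" using i1n by (auto simp: pts_def)
    show ?thesis
    proof (cases bl)
      case True
      have b3: "bpos n (M (False, i + 1)) > k" using r True ln ik' by simp
      have False
      proof (rule cross[of "(False, i)" "(False, i + 1)"])
        show "bpos n (False, i) < bpos n (False, i + 1)" by simp
        show "bpos n (False, i + 1) < bpos n (M (False, i))" using ik' k2 by simp
        show "bpos n (M (False, i)) < bpos n (M (False, i + 1))" using ik' b3 by simp
      qed (use pi in auto)
      thus ?thesis ..
    next
      case blF: False
      have lni: "l \<noteq> i + 1" using inv[OF i1n] r blF by auto
      have lk: "l \<noteq> k" using inv[OF i1n] r blF Mk by auto
      have li: "l \<noteq> i"
      proof
        assume "l = i"
        hence "M (False, i) = (False, i + 1)" using inv(1)[OF i1n] r blF by simp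
        thus False using ik'(3) k2 by simp
      qed
      consider "l < i" | "i + 1 < l \<and> l < k" | "k < l" using lni lk li by linarith
      thus ?thesis
      proof cases
        case 1
        have "M (False, l) = (False, i + 1)" using inv[OF i1n] r blF by simp
        moreover have "(False, l) \<in> pts n" using ln by (simp add: pts_def)
        ultimately have False
        proof (intro cross[of "(False, l)" "(False, i)"])
          show "bpos n (False, l) < bpos n (False, i)" using 1 by simp
          show "bpos n (False, i) < bpos n (M (False, l))" using \<open>M (False, l) = (False, i + 1)\<close> by simp
          show "bpos n (M (False, l)) < bpos n (M (False, i))" using \<open>M (False, l) = (False, i + 1)\<close> ik' k2 by simp
        qed (use pi \<open>(False, l) \<in> pts n\<close> in auto)
        thus ?thesis ..
      next
        case 2
        hence "(i + 1, l) \<in> G" using r blF ln by (auto simp: G_def)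
        hence "d \<le> l - (i + 1)" using dmin by blast
        hence False using 2 ik by linarith
        thus ?thesis ..
      next
        case 3
        have False
        proof (rule cross[of "(False, i)" "(False, i + 1)"])
          show "bpos n (False, i) < bpos n (False, i + 1)" by simp
          show "bpos n (False, i + 1) < bpos n (M (False, i))" using ik' k2 by simp
          show "bpos n (M (False, i)) < bpos n (M (False, i + 1))" using ik' r blF 3 by simp
        qed (use pi in auto)
        thus ?thesis ..
      qed
    qed
  qed
qed


lemma NC_cong:
  assumes "\<And>p. p \<in> pts n \<Longrightarrow> f p = g p" "\<And>p. p \<in> pts n \<Longrightarrow> D p \<in> pts n"
  shows "NC n f D = NC n g D"
  unfolding NC_def using assms by auto

lemma Xc_sym1: "Xc u v w z = Xc v u w z" unfolding Xc_def by (simp add: min.commute max.commute)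
lemma Xc_sym2: "Xc u v w z = Xc u v z w" unfolding Xc_def by auto
lemma Xc_swap: "u \<noteq> w \<Longrightarrow> u \<noteq> z \<Longrightarrow> v \<noteq> w \<Longrightarrow> v \<noteq> z \<Longrightarrow> Xc u v w z = Xc w z u v"
  unfolding Xc_def min_def max_def by (auto split: if_splits)

lemma bpos_lt: "p \<in> pts n \<Longrightarrow> bpos n p < 2 * n"
  by (cases p) (auto simp: pts_def bpos_def)

locale dec =
  fixes n a :: nat and M :: diagram
  assumes M: "M \<in> CM n" and an: "a + 1 < n" and cup: "M (False, a) = (False, a + 1)"
begin

definition rho :: "pt \<Rightarrow> nat" where
  "rho p = (if fst p then 2 * n - 2 - snd p - a else if snd p \<le> a then snd p + 2 * n - a - 1 else snd p - a - 1)"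

definition L0 where "L0 = 2 * n - 2 - 2 * a"

lemma rho_lt: "p \<in> pts n \<Longrightarrow> rho p < 2 * n"
  using an by (cases p) (auto simp: rho_def pts_def)

lemma bpos_rho: "p \<in> pts n \<Longrightarrow> bpos n p = (rho p + (a + 1)) mod (2 * n)"
proof (cases p)
  case (Pair b s)
  assume "p \<in> pts n"
  hence s: "s < n" using Pair by (simp add: pts_def)
  show ?thesis
  proof (cases b)
    case True thus ?thesis using Pair s an by (simp add: rho_def bpos_def)
  next
    case False
    show ?thesis
    proof (cases "s \<le> a")
      case True
      hence "rho p + (a + 1) = s + 2 * n" using Pair False an by (simp add: rho_def)
      thus ?thesis using Pair False s by (simp add: bpos_def)
    next
      case f2: False
      thus ?thesis using Pair False s an by (simp add: rho_def bpos_def)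
    qed
  qed
qed

lemma rho_bpos: "p \<in> pts n \<Longrightarrow> rho p = (bpos n p + (2 * n - (a + 1))) mod (2 * n)"
proof (cases p)
  case (Pair b s)
  assume "p \<in> pts n"
  hence s: "s < n" using Pair by (simp add: pts_def)
  show ?thesis
  proof (cases b)
    case True
    hence h: "bpos n p + (2 * n - (a + 1)) = (2 * n - 2 - s - a) + 2 * n" using Pair s an by (simp add: bpos_def)
    have lt: "2 * n - 2 - s - a < 2 * n" using an by arith
    have eq: "(bpos n p + (2 * n - (a + 1))) mod (2 * n) = 2 * n - 2 - s - a"
      unfolding h using lt by simp
    show ?thesis unfolding eq using Pair True by (simp add: rho_def)
  next
    case False
    show ?thesis
    proof (cases "s \<le> a")
      case True
      thus ?thesis using Pair False s an by (simp add: rho_def bpos_def)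
    next
      case f2: False
      hence h: "bpos n p + (2 * n - (a + 1)) = (s - a - 1) + 2 * n" using Pair False s an by (simp add: bpos_def)
      have lt: "s - a - 1 < 2 * n" using s by simp
      have eq: "(bpos n p + (2 * n - (a + 1))) mod (2 * n) = s - a - 1"
        unfolding h using lt by simp
      show ?thesis unfolding eq using Pair False f2 by (simp add: rho_def)
    qed
  qed
qed

lemma bpos_inj: "inj_on (bpos n) (pts n)"
  by (rule inj_onI) (auto simp: bpos_def pts_def split: if_splits)

lemma rho_inj: "inj_on rho (pts n)"
proof (rule inj_onI)
  fix p q assume "p \<in> pts n" "q \<in> pts n" "rho p = rho q"
  hence "bpos n p = bpos n q" using bpos_rho by metis
  thus "p = q" using bpos_inj \<open>p \<in> pts n\<close> \<open>q \<in> pts n\<close> by (auto dest: inj_onD)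
qed

lemma left_iff: "p \<in> pts n \<Longrightarrow> snd p \<le> a \<longleftrightarrow> L0 \<le> rho p"
  using an by (cases p) (auto simp: rho_def pts_def L0_def)

abbreviation ba where "ba \<equiv> (False, a)"
abbreviation bb where "bb \<equiv> (False, a + 1)"

lemma rho_ba: "rho ba = 2 * n - 1" using an by (simp add: rho_def)
lemma rho_bb: "rho bb = 0" by (simp add: rho_def)
lemma ba_pts: "ba \<in> pts n" and bb_pts: "bb \<in> pts n" using an by (auto simp: pts_def)

lemma rho_lt_ba: "p \<in> pts n \<Longrightarrow> p \<noteq> ba \<Longrightarrow> rho p < 2 * n - 1"
  using rho_lt rho_inj ba_pts rho_ba by (metis Suc_diff_1 inj_on_eq_iff less_Suc_eq less_nat_zero_code mult_is_0 neq0_conv)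

lemma rho_gt_bb: "p \<in> pts n \<Longrightarrow> p \<noteq> bb \<Longrightarrow> 0 < rho p"
  using rho_inj bb_pts rho_bb by (metis inj_on_eq_iff neq0_conv)

lemma Minv: "p \<in> pts n \<Longrightarrow> M p \<in> pts n \<and> M p \<noteq> p \<and> M (M p) = p" using CM_D[OF M] .

lemma Mbb: "M bb = ba" using Minv[OF ba_pts] cup by simp

lemma NC_rho_M: "NC n rho M"
proof -
  have "NC n (bpos n) M" using M by (simp add: CM_iff)
  hence "NC n (\<lambda>p. (bpos n p + (2 * n - (a + 1))) mod (2 * n)) M"
    using Minv bpos_lt by (intro NC_rot) auto
  thus ?thesis using NC_cong[of n "\<lambda>p. (bpos n p + (2 * n - (a + 1))) mod (2 * n)" rho M] rho_bpos Minv by simp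
qed

lemma noX_M: "p \<in> pts n \<Longrightarrow> q \<in> pts n \<Longrightarrow> q \<noteq> p \<Longrightarrow> q \<noteq> M p \<Longrightarrow> \<not> Xc (rho p) (rho (M p)) (rho q) (rho (M q))"
  using NC_Xc[OF _ rho_inj NC_rho_M] Minv by blast

definition Xset where "Xset = {p \<in> pts n. snd p \<le> a \<and> a + 1 \<le> snd (M p) \<and> p \<noteq> ba}"

lemma Xset_ne: "Xset \<noteq> {}"
proof -
  define Lt where "Lt = {p \<in> pts n. snd p \<le> a}"
  define A where "A = {p \<in> Lt. snd (M p) \<le> a}"
  define Cr where "Cr = {p \<in> Lt. a + 1 \<le> snd (M p)}"
  have Lt_eq: "Lt = UNIV \<times> {..a}" using an by (auto simp: Lt_def pts_def)
  have cLt: "card Lt = 2 * (a + 1)" unfolding Lt_eq by (simp add: card_cartesian_product card_UNIV_bool)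
  have finLt: "finite Lt" unfolding Lt_eq by simp
  have evA: "even (card A)"
  proof (rule even_card_inv[where f = M])
    show "finite A" using finLt by (simp add: A_def)
    fix p assume "p \<in> A"
    thus "M p \<in> A \<and> M p \<noteq> p \<and> M (M p) = p" using Minv[of p] by (auto simp: A_def Lt_def)
  qed
  have "card Lt = card A + card Cr"
    unfolding A_def Cr_def using finLt by (subst card_Un_disjoint[symmetric]) (auto intro: arg_cong[where f = card])
  hence evC: "even (card Cr)" using evA cLt by presburger
  have baC: "ba \<in> Cr" using ba_pts cup by (simp add: Cr_def Lt_def)
  have "Cr \<noteq> {ba}"
  proof
    assume "Cr = {ba}" thus False using evC by simp
  qed
  then obtain p where "p \<in> Cr" "p \<noteq> ba" using baC by blast
  hence "p \<in> Xset" by (simp add: Cr_def Lt_def Xset_def)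
  thus ?thesis by blast
qed

lemma finite_Xset: "finite Xset" using finite_pts by (simp add: Xset_def)

definition x where "x = (SOME x. x \<in> Xset \<and> (\<forall>z\<in>Xset. rho z \<le> rho x))"

lemma x_ex: "\<exists>x. x \<in> Xset \<and> (\<forall>z\<in>Xset. rho z \<le> rho x)"
proof -
  define m where "m = Max (rho ` Xset)"
  have "m \<in> rho ` Xset" unfolding m_def using finite_Xset Xset_ne by (intro Max_in) auto
  then obtain x0 where "x0 \<in> Xset" "rho x0 = m" by blast
  moreover have "\<forall>z\<in>Xset. rho z \<le> m" unfolding m_def using finite_Xset by auto
  ultimately show ?thesis by metis
qed

lemma x_props: "x \<in> Xset" "\<And>z. z \<in> Xset \<Longrightarrow> rho z \<le> rho x"
  using someI_ex[OF x_ex] unfolding x_def[symmetric] by auto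

definition y where "y = M x"

lemma xy: "x \<in> pts n" "snd x \<le> a" "a + 1 \<le> snd y" "x \<noteq> ba" "y \<in> pts n" "M y = x"
  "x \<noteq> bb" "y \<noteq> ba" "y \<noteq> bb" "x \<noteq> y"
proof -
  show x1: "x \<in> pts n" "snd x \<le> a" "a + 1 \<le> snd y" "x \<noteq> ba"
    using x_props(1) by (auto simp: Xset_def y_def)
  show "y \<in> pts n" "M y = x" using Minv[OF x1(1)] by (auto simp: y_def)
  show "x \<noteq> bb" using x1 by auto
  show "y \<noteq> ba" using x1 by auto
  show "y \<noteq> bb"
  proof
    assume "y = bb"
    hence "M y = ba" using Mbb by simp
    thus False using Minv[OF x1(1)] x1(4) by (simp add: y_def)
  qed
  show "x \<noteq> y" using x1 by auto
qed

lemma rho_x: "L0 \<le> rho x" using left_iff[of x] xy by simp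
lemma rho_y: "rho y < L0" using left_iff[of y] xy by simp

definition S where "S = {ba, bb, x, y}"

lemma M_S: "p \<in> pts n \<Longrightarrow> p \<notin> S \<Longrightarrow> M p \<notin> S"
proof
  assume p: "p \<in> pts n" "p \<notin> S" and "M p \<in> S"
  hence "M (M p) \<in> M ` S" by blast
  moreover have "M ` S = S" using cup Mbb xy by (auto simp: S_def y_def)
  ultimately show False using Minv[OF p(1)] p(2) by simp
qed

definition M2 :: diagram where
  "M2 p = (if p = ba then x else if p = x then ba else if p = bb then y else if p = y then bb else M p)"

lemma M2_vals: "M2 ba = x" "M2 x = ba" "M2 bb = y" "M2 y = bb"
  using xy by (auto simp: M2_def)

lemma M2_out: "p \<notin> S \<Longrightarrow> M2 p = M p" by (auto simp: M2_def S_def)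

lemma S_pts: "S \<subseteq> pts n" using xy ba_pts bb_pts by (auto simp: S_def)

lemma M2_inv: "p \<in> pts n \<Longrightarrow> M2 p \<in> pts n \<and> M2 p \<noteq> p \<and> M2 (M2 p) = p"
proof -
  assume p: "p \<in> pts n"
  show ?thesis
  proof (cases "p \<in> S")
    case True
    thus ?thesis using xy ba_pts bb_pts M2_vals by (auto simp: S_def)
  next
    case False
    thus ?thesis using M2_out[OF False] M2_out[OF M_S[OF p False]] Minv[OF p] by simp
  qed
qed

lemma K1a:
  assumes u: "u \<in> pts n" "u \<notin> S" and o: "rho u < rho x" "rho x < rho (M u)"
  shows False
proof -
  let ?v = "M u"
  have v: "?v \<in> pts n" "?v \<notin> S" "M ?v = u" using Minv[OF u(1)] M_S[OF u] by auto
  have vL: "L0 \<le> rho ?v" using o rho_x by simp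
  show False
  proof (cases "rho u < L0")
    case True
    have "?v \<in> Xset" using v vL True left_iff[OF v(1)] left_iff[OF u(1)] by (auto simp: Xset_def S_def)
    thus False using x_props(2) o by fastforce
  next
    case False
    have "\<not> Xc (rho x) (rho (M x)) (rho u) (rho (M u))"
      using noX_M[OF xy(1) u(1)] u(2) by (auto simp: S_def y_def)
    moreover have "rho y < rho u" using False rho_y by simp
    ultimately show False using o by (simp add: Xc_def y_def)
  qed
qed

lemma K1: assumes u: "u \<in> pts n" "u \<notin> S" shows "\<not> Xc (rho ba) (rho x) (rho u) (rho (M u))"
proof
  assume X: "Xc (rho ba) (rho x) (rho u) (rho (M u))"
  have v: "M u \<in> pts n" "M u \<notin> S" "M (M u) = u" using Minv[OF u(1)] M_S[OF u] by auto
  have ne: "u \<noteq> x" "M u \<noteq> x" "u \<noteq> ba" "M u \<noteq> ba" using u v by (auto simp: S_def)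
  have r1: "rho u \<noteq> rho x" "rho (M u) \<noteq> rho x" using ne rho_inj u v xy by (auto dest: inj_onD)
  have r2: "rho u < 2 * n - 1" "rho (M u) < 2 * n - 1" using rho_lt_ba u v ne by auto
  have rx: "rho x < 2 * n - 1" using rho_lt_ba xy by auto
  from X r1 r2 rx have "(rho u < rho x \<and> rho x < rho (M u)) \<or> (rho (M u) < rho x \<and> rho x < rho u)"
    unfolding Xc_def rho_ba by (auto simp: min_def max_def split: if_splits)
  thus False
  proof
    assume "rho u < rho x \<and> rho x < rho (M u)" thus False using K1a u by blast
  next
    assume "rho (M u) < rho x \<and> rho x < rho u" thus False using K1a[of "M u"] v by simp
  qed
qed

lemma K2a:
  assumes u: "u \<in> pts n" "u \<notin> S" and o: "0 < rho u" "rho u < rho y" "rho y < rho (M u)"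
  shows False
proof -
  let ?v = "M u"
  have v: "?v \<in> pts n" "?v \<notin> S" "M ?v = u" using Minv[OF u(1)] M_S[OF u] by auto
  have uR: "rho u < L0" using o rho_y by simp
  have nX: "\<not> Xc (rho x) (rho (M x)) (rho u) (rho (M u))"
    using noX_M[OF xy(1) u(1)] u(2) by (auto simp: S_def y_def)
  show False
  proof (cases "L0 \<le> rho ?v")
    case True
    have "?v \<in> Xset" using v True uR left_iff[OF v(1)] left_iff[OF u(1)] by (auto simp: Xset_def S_def)
    hence "rho ?v \<le> rho x" using x_props(2) by blast
    moreover have "rho ?v \<noteq> rho x" using v xy rho_inj by (auto simp: S_def dest: inj_onD)
    ultimately have "rho ?v < rho x" by simp
    thus False using nX o by (simp add: Xc_def y_def)
  next
    case False
    hence "rho ?v < rho x" using rho_x by simp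
    thus False using nX o by (simp add: Xc_def y_def)
  qed
qed

lemma K2: assumes u: "u \<in> pts n" "u \<notin> S" shows "\<not> Xc (rho bb) (rho y) (rho u) (rho (M u))"
proof
  assume X: "Xc (rho bb) (rho y) (rho u) (rho (M u))"
  have v: "M u \<in> pts n" "M u \<notin> S" "M (M u) = u" using Minv[OF u(1)] M_S[OF u] by auto
  have ne: "u \<noteq> y" "M u \<noteq> y" "u \<noteq> bb" "M u \<noteq> bb" using u v by (auto simp: S_def)
  have r1: "rho u \<noteq> rho y" "rho (M u) \<noteq> rho y" using ne rho_inj u v xy by (auto dest: inj_onD)
  have r2: "0 < rho u" "0 < rho (M u)" using rho_gt_bb u v ne by auto
  from X r1 r2 have "(rho u < rho y \<and> rho y < rho (M u)) \<or> (rho (M u) < rho y \<and> rho y < rho u)"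
    unfolding Xc_def rho_bb by (auto simp: min_def max_def split: if_splits)
  thus False
  proof
    assume "rho u < rho y \<and> rho y < rho (M u)" thus False using K2a u r2 by blast
  next
    assume "rho (M u) < rho y \<and> rho y < rho u" thus False using K2a[of "M u"] v r2 by simp
  qed
qed

lemma K3: "\<not> Xc (rho ba) (rho x) (rho bb) (rho y)"
  using rho_x rho_y rho_lt_ba[OF xy(1) xy(4)] unfolding Xc_def rho_ba rho_bb by (auto simp: min_def max_def)

lemma rho_distinct: "rho ba \<noteq> rho bb" "rho ba \<noteq> rho x" "rho ba \<noteq> rho y"
  "rho bb \<noteq> rho x" "rho bb \<noteq> rho y" "rho x \<noteq> rho y"
  using rho_inj ba_pts bb_pts xy by (auto dest: inj_onD)

lemma XC_S_out: assumes p: "p \<in> S" and q: "q \<in> pts n" "q \<notin> S"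
  shows "\<not> Xc (rho p) (rho (M2 p)) (rho q) (rho (M2 q))"
proof -
  have m: "M2 q = M q" using M2_out[OF q(2)] .
  from p consider "p = ba" | "p = bb" | "p = x" | "p = y" by (auto simp: S_def)
  thus ?thesis
  proof cases
    case 1 thus ?thesis using K1[OF q] m M2_vals by simp
  next
    case 2 thus ?thesis using K2[OF q] m M2_vals by simp
  next
    case 3 thus ?thesis using K1[OF q] m M2_vals Xc_sym1 by metis
  next
    case 4 thus ?thesis using K2[OF q] m M2_vals Xc_sym1 by metis
  qed
qed

lemma M2_S: "p \<in> S \<Longrightarrow> M2 p \<in> S" using M2_vals by (auto simp: S_def)

lemma XC_out_S: assumes p: "p \<in> pts n" "p \<notin> S" and q: "q \<in> S"
  shows "\<not> Xc (rho p) (rho (M2 p)) (rho q) (rho (M2 q))"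
proof -
  have q2: "M2 q \<in> S" using M2_S[OF q] .
  have p2: "M2 p \<in> pts n" "M2 p \<notin> S" using M2_out[OF p(2)] Minv[OF p(1)] M_S[OF p] by auto
  have d: "rho p \<noteq> rho q" "rho p \<noteq> rho (M2 q)" "rho (M2 p) \<noteq> rho q" "rho (M2 p) \<noteq> rho (M2 q)"
    using rho_inj p p2 q q2 S_pts by (auto dest: inj_onD)
  have "\<not> Xc (rho q) (rho (M2 q)) (rho p) (rho (M2 p))" using XC_S_out[OF q p] .
  thus ?thesis using Xc_swap[OF d] by simp
qed

lemma XC_SS: assumes p: "p \<in> S" and q: "q \<in> S" and ne: "q \<noteq> p" "q \<noteq> M2 p"
  shows "\<not> Xc (rho p) (rho (M2 p)) (rho q) (rho (M2 q))"
proof -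
  have K3': "\<not> Xc (rho bb) (rho y) (rho ba) (rho x)"
    using K3 Xc_swap rho_distinct by metis
  from p consider "p = ba" | "p = bb" | "p = x" | "p = y" by (auto simp: S_def)
  thus ?thesis
  proof cases
    case 1
    hence "q = bb \<or> q = y" using q ne M2_vals by (auto simp: S_def)
    thus ?thesis using 1 K3 M2_vals Xc_sym2 by metis
  next
    case 3
    hence "q = bb \<or> q = y" using q ne M2_vals by (auto simp: S_def)
    thus ?thesis using 3 K3 M2_vals Xc_sym1 Xc_sym2 by metis
  next
    case 2
    hence "q = ba \<or> q = x" using q ne M2_vals by (auto simp: S_def)
    thus ?thesis using 2 K3' M2_vals Xc_sym2 by metis
  next
    case 4
    hence "q = ba \<or> q = x" using q ne M2_vals by (auto simp: S_def)
    thus ?thesis using 4 K3' M2_vals Xc_sym1 Xc_sym2 by metis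
  qed
qed

lemma NC_rho_M2: "NC n rho M2"
proof (rule Xc_NC)
  fix p q assume p: "p \<in> pts n" and q: "q \<in> pts n" and ne: "q \<noteq> p" "q \<noteq> M2 p"
  show "\<not> Xc (rho p) (rho (M2 p)) (rho q) (rho (M2 q))"
  proof (cases "p \<in> S")
    case True
    show ?thesis
    proof (cases "q \<in> S")
      case True thus ?thesis using XC_SS \<open>p \<in> S\<close> ne by blast
    next
      case False thus ?thesis using XC_S_out \<open>p \<in> S\<close> q by blast
    qed
  next
    case pS: False
    show ?thesis
    proof (cases "q \<in> S")
      case True thus ?thesis using XC_out_S p pS by blast
    next
      case False
      thus ?thesis using noX_M[OF p q] ne M2_out pS by simp
    qed
  qed
qed

lemma M2_CM: "M2 \<in> CM n"
proof -
  have "NC n (\<lambda>p. (rho p + (a + 1)) mod (2 * n)) M2"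
    using M2_inv rho_lt an by (intro NC_rot[OF _ _ _ NC_rho_M2]) auto
  hence nc: "NC n (bpos n) M2"
    using NC_cong[of n "\<lambda>p. (rho p + (a + 1)) mod (2 * n)" "bpos n" M2] bpos_rho M2_inv by simp
  have out: "M2 p = p" if "p \<notin> pts n" for p
  proof -
    have "p \<notin> S" using that S_pts by blast
    thus ?thesis using M2_out CM_out[OF M that] by simp
  qed
  show ?thesis unfolding CM_iff using M2_inv out nc by blast
qed

end


lemma hook_CM: assumes i: "1 \<le> i" "i < n" shows "hook n i \<in> CM n"
  unfolding CM_def
proof (intro CollectI conjI)
  show "\<forall>p\<in>pts n. hook n i p \<in> pts n \<and> hook n i p \<noteq> p \<and> hook n i (hook n i p) = p"
  proof
    fix p assume "p \<in> pts n"
    thus "hook n i p \<in> pts n \<and> hook n i p \<noteq> p \<and> hook n i (hook n i p) = p"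
      using i by (cases p) (auto simp: hook_def pts_def)
  qed
  show "\<forall>p. p \<notin> pts n \<longrightarrow> hook n i p = p"
    using i by (auto simp: hook_def pts_def)
  show "\<not> (\<exists>p\<in>pts n. \<exists>q\<in>pts n. bpos n p < bpos n q \<and> bpos n q < bpos n (hook n i p) \<and> bpos n (hook n i p) < bpos n (hook n i q))"
  proof
    assume "\<exists>p\<in>pts n. \<exists>q\<in>pts n. bpos n p < bpos n q \<and> bpos n q < bpos n (hook n i p) \<and> bpos n (hook n i p) < bpos n (hook n i q)"
    then obtain b1 j1 b2 j2 where h: "j1 < n" "j2 < n" "bpos n (b1, j1) < bpos n (b2, j2)"
      "bpos n (b2, j2) < bpos n (hook n i (b1, j1))" "bpos n (hook n i (b1, j1)) < bpos n (hook n i (b2, j2))"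
      by (auto simp: pts_def)
    show False using h i by (cases b1; cases b2) (auto simp: hook_def bpos_def split: if_splits)
  qed
qed


context dec
begin

abbreviation H where "H \<equiv> hook n (a + 1)"

lemma H_CM: "H \<in> CM n" using an by (intro hook_CM) auto

lemma H_vals: "H (b, a) = (b, a + 1)" "H (b, a + 1) = (b, a)"
  "j < n \<Longrightarrow> j \<noteq> a \<Longrightarrow> j \<noteq> a + 1 \<Longrightarrow> H (b, j) = (\<not> b, j)"
  by (auto simp: hook_def)

lemma two_HM2: "two n H M2" using H_CM M2_CM by (simp add: two_def)

lemma compose_M2: "compose n H M2 = M"
proof
  fix p
  interpret T: two n H M2 by (rule two_HM2)
  have eH: "(lowlift p, lowlift (H p)) \<in> glue_conn n H M2" if "p \<in> pts n" for p
    using that unfolding glue_conn_def glue_edges_def by blast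
  have eQ: "(uplift p, uplift (M2 p)) \<in> glue_conn n H M2" if "p \<in> pts n" for p
    using that unfolding glue_conn_def glue_edges_def by blast
  have portal: "(outer p, uplift p) \<in> glue_conn n H M2" if p: "p \<in> pts n" "p \<noteq> ba" "p \<noteq> bb" for p
  proof (cases p)
    case (Pair b j)
    show ?thesis
    proof (cases b)
      case True thus ?thesis using Pair T.C_refl by (simp add: outer_def uplift_def)
    next
      case False
      have j: "j < n" "j \<noteq> a" "j \<noteq> a + 1" using p Pair False by (auto simp: pts_def)
      have "H p = (True, j)" using H_vals(3)[OF j] Pair False by simp
      moreover have "outer p = lowlift p" "lowlift (True, j) = uplift p" using Pair False by (auto simp: outer_def lowlift_def uplift_def)
      ultimately show ?thesis using eH[OF p(1)] by simp
    qed
  qed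
  have chord: "(outer q, outer (M q)) \<in> glue_conn n H M2" if q: "q \<in> pts n" for q
  proof -
    have xpath: "(outer x, outer y) \<in> glue_conn n H M2"
    proof -
      have 1: "(outer x, uplift x) \<in> glue_conn n H M2" using portal xy by blast
      have 2: "(uplift x, uplift ba) \<in> glue_conn n H M2" using eQ[OF xy(1)] M2_vals by simp
      have 3: "(uplift ba, uplift bb) \<in> glue_conn n H M2"
      proof -
        have "(True, a) \<in> pts n" using an by (simp add: pts_def)
        from eH[OF this] show ?thesis using H_vals(1)[of True] by (simp add: lowlift_def uplift_def)
      qed
      have 4: "(uplift bb, uplift y) \<in> glue_conn n H M2" using eQ[OF bb_pts] M2_vals by simp
      have 5: "(uplift y, outer y) \<in> glue_conn n H M2" using portal[of y] xy T.C_sym by blast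
      show ?thesis using 1 2 3 4 5 T.C_trans by meson
    qed
    show ?thesis
    proof (cases "q \<in> S")
      case True
      then consider "q = ba" | "q = bb" | "q = x" | "q = y" by (auto simp: S_def)
      thus ?thesis
      proof cases
        case 1
        have "(lowlift ba, lowlift (H ba)) \<in> glue_conn n H M2" using eH[OF ba_pts] .
        thus ?thesis using 1 cup H_vals(1)[of False] by (simp add: outer_def lowlift_def)
      next
        case 2
        have "(lowlift bb, lowlift (H bb)) \<in> glue_conn n H M2" using eH[OF bb_pts] .
        thus ?thesis using 2 Mbb H_vals(2)[of False] by (simp add: outer_def lowlift_def)
      next
        case 3 thus ?thesis using xpath by (simp add: y_def)
      next
        case 4 thus ?thesis using xpath T.C_sym xy(6) by simp
      qed
    next
      case False
      have mq: "M q \<in> pts n" "M q \<notin> S" using Minv[OF q] M_S[OF q False] by auto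
      have 1: "(outer q, uplift q) \<in> glue_conn n H M2" using portal[OF q] False by (auto simp: S_def)
      have 2: "(uplift q, uplift (M q)) \<in> glue_conn n H M2" using eQ[OF q] M2_out[OF False] by simp
      have 3: "(uplift (M q), outer (M q)) \<in> glue_conn n H M2" using portal[OF mq(1)] mq(2) T.C_sym by (auto simp: S_def)
      show ?thesis using 1 2 3 T.C_trans by meson
    qed
  qed
  show "compose n H M2 p = M p"
  proof (cases "p \<in> pts n")
    case True
    have "M p = compose n H M2 p"
      using T.compose_uniq[OF True] Minv[OF True] chord[OF True] by blast
    thus ?thesis by simp
  next
    case False thus ?thesis using CM_out[OF M False] by (simp add: compose_def)
  qed
qed

lemma cr_split:
  assumes "\<And>p. p \<in> pts n \<Longrightarrow> p \<notin> S \<Longrightarrow> D p = M p"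
  shows "cr n j D = card {p \<in> pts n - S. snd p < j \<and> j \<le> snd (M p)} + card {p \<in> S. snd p < j \<and> j \<le> snd (D p)}"
proof -
  have "{p \<in> pts n. snd p < j \<and> j \<le> snd (D p)} = {p \<in> pts n - S. snd p < j \<and> j \<le> snd (M p)} \<union> {p \<in> S. snd p < j \<and> j \<le> snd (D p)}"
    using assms S_pts by auto
  moreover have "finite (pts n - S)" "finite S" using finite_pts by (auto simp: S_def)
  ultimately show ?thesis unfolding cr_def by (subst card_Un_disjoint[symmetric]) auto
qed

lemma card_filter4: "distinct [u1, u2, u3, u4] \<Longrightarrow>
  card {p \<in> {u1, u2, u3, u4}. P p} = (if P u1 then 1 else 0) + (if P u2 then 1 else 0) + (if P u3 then 1 else 0) + (if P u4 then 1 else (0::nat))"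
proof -
  assume d: "distinct [u1, u2, u3, u4]"
  have "{p \<in> {u1, u2, u3, u4}. P p} = set (filter P [u1, u2, u3, u4])" by auto
  moreover have "card (set (filter P [u1, u2, u3, u4])) = length (filter P [u1, u2, u3, u4])"
    using d by (intro distinct_card) simp
  ultimately show ?thesis by simp
qed

lemma S_distinct: "distinct [ba, bb, x, y]" using xy by auto

lemma cardS: "card {p \<in> S. Q p} = (if Q ba then 1 else 0) + (if Q bb then 1 else 0) + (if Q x then 1 else 0) + (if Q y then 1 else (0::nat))"
  unfolding S_def by (rule card_filter4[OF S_distinct])

lemma cr_M2: "cr n j M2 + (if j = a + 1 then 2 else 0) \<le> cr n j M"
proof -
  have c1: "cr n j M2 = card {p \<in> pts n - S. snd p < j \<and> j \<le> snd (M p)} + card {p \<in> S. snd p < j \<and> j \<le> snd (M2 p)}"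
    using M2_out by (intro cr_split) auto
  have c2: "cr n j M = card {p \<in> pts n - S. snd p < j \<and> j \<le> snd (M p)} + card {p \<in> S. snd p < j \<and> j \<le> snd (M p)}"
    by (intro cr_split) auto
  have "card {p \<in> S. snd p < j \<and> j \<le> snd (M2 p)} + (if j = a + 1 then 2 else 0) \<le> card {p \<in> S. snd p < j \<and> j \<le> snd (M p)}"
    unfolding cardS using xy M2_vals cup Mbb by (simp add: y_def)
  thus ?thesis using c1 c2 by simp
qed

lemma Phi_M2: "Phi n M2 + 2 \<le> Phi n M"
proof -
  have "(\<Sum>j\<le>n. cr n j M2 + (if j = a + 1 then 2 else 0)) \<le> (\<Sum>j\<le>n. cr n j M)"
    by (intro sum_mono cr_M2)
  moreover have "(\<Sum>j\<le>n. (if j = a + 1 then 2 else 0::nat)) = 2" using an by simp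
  ultimately show ?thesis by (simp add: Phi_def sum.distrib)
qed

end

lemma word_exists:
  assumes "M \<in> CM n"
  shows "\<exists>w. set w \<subseteq> {1..n-1} \<and> word_eval n w = M \<and> 2 * length w \<le> Phi n M"
  using assms
proof (induction "Phi n M" arbitrary: M rule: less_induct)
  case less
  show ?case
  proof (cases "M = id_diag n")
    case True thus ?thesis by (intro exI[of _ "[]"]) (simp add: word_eval_def)
  next
    case False
    then obtain a where a: "a + 1 < n" "M (False, a) = (False, a + 1)" using adj_cup less.prems by blast
    interpret D: dec n a M using less.prems a by (simp add: dec_def)
    have "Phi n D.M2 < Phi n M" using D.Phi_M2 by simp
    then obtain w where w: "set w \<subseteq> {1..n-1}" "word_eval n w = D.M2" "2 * length w \<le> Phi n D.M2"
      using less.hyps D.M2_CM by blast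
    have "word_eval n ((a + 1) # w) = M" using w(2) D.compose_M2 by (simp add: word_eval_def)
    moreover have "set ((a + 1) # w) \<subseteq> {1..n-1}" using w(1) a by auto
    moreover have "2 * length ((a + 1) # w) \<le> Phi n M" using w(3) D.Phi_M2 by simp
    ultimately show ?thesis by blast
  qed
qed


theorem mainTheorem9:
  fixes n :: nat and M :: diagram
  assumes "n \<ge> 1" and "M \<in> CM n" and "jw n M \<noteq> 0"
  shows "min_deg (jw n M) \<ge> 2 * int (hook_len n M)"
proof -
  obtain m where n: "n = Suc m" using assms(1) by (cases n) auto
  have "good (int (Phi n M) - 0) (jw n M)" using GoodS_jw[of m] assms(2) n by (simp add: GoodS_def)
  hence "good (int (Phi n M)) (jw n M)" by simp
  hence le1: "int (Phi n M) \<le> min_deg (jw n M)" using assms(3) by (rule good_min_deg)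
  obtain w where w: "set w \<subseteq> {1..n-1}" "word_eval n w = M" "2 * length w \<le> Phi n M"
    using word_exists[OF assms(2)] by blast
  have "hook_len n M \<le> length w" unfolding hook_len_def by (rule Least_le) (use w in blast)
  hence "2 * int (hook_len n M) \<le> int (Phi n M)" using w(3) by linarith
  thus ?thesis using le1 by linarith
qed


end
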